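(* Let $\rho$ be a density matrix of rank two on the $N$-qubit space $H=(\mathbb{C}^2)^{\otimes N}$. Let $|\tilde 0\rangle,|\tilde 1\rangle$ be an orthonormal basis of the support (range) of $\rho$, and define operators on $H$ $$\tau_1=|\tilde 0\rangle\langle\tilde 1|+|\tilde 1\rangle\langle\tilde 0|,\quad \tau_2=-i|\tilde 0\rangle\langle\tilde 1|+i|\tilde 1\rangle\langle\tilde 0|,\quad \tau_3=|\tilde 0\rangle\langle\tilde 0|-|\tilde 1\rangle\langle\tilde 1|.$$ Let $W$ be the real symmetric $3\times 3$ matrix with entries $W_{ij}=\mathrm{Tr}\big(\mathcal{S}\,(\tau_i\otimes\tau_j)\big)$, $i,j\in\{1,2,3\}$, and let $w_{\min}$ be its smallest eigenvalue. Then $$\mathcal{E}(\rho)=\mathcal{C}(\rho)+\tfrac12\big(1-\mathrm{Tr}(\rho^2)\big)\,w_{\min}.$$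
   Context: Let $\sigma_1,\sigma_2,\sigma_3$ be the Pauli matrices and $\sigma_0=\mathbb{I}$. For an $N$-qubit state $\rho$ put $T_{\mu_1\dots\mu_N}=\mathrm{Tr}(\rho\,\sigma_{\mu_1}\otimes\dots\otimes\sigma_{\mu_N})$ and define the length of correlations $\mathcal{C}(\rho)=\sum_{j_1,\dots,j_N=1}^{3}T_{j_1\dots j_N}^2$; for a pure state $|\Psi\rangle$ write $\mathcal{C}(\Psi)=\mathcal{C}(|\Psi\rangle\langle\Psi|)$. Consider two copies $H\otimes H$ of the $N$-qubit space, where qubit $n$ of the first copy is paired with qubit $n'$ of the second copy, and define the operator $\mathcal{S}=\bigotimes_{n=1}^{N}\Big(\sum_{j=1}^{3}\sigma_j^{(n)}\otimes\sigma_j^{(n')}\Big)$ on $H\otimes H$; then $\mathcal{C}(\rho)=\mathrm{Tr}\big((\rho\otimes\rho)\,\mathcal{S}\big)$. The convex-roof extension is $\mathcal{E}(\rho)=\min\sum_k\mu_k\,\mathcal{C}(\Psi_k)$, the minimum taken over all pure-state decompositions $\rho=\sum_k\mu_k|\Psi_k\rangle\langle\Psi_k|$ with $\mu_k>0$, $\sum_k\mu_k=1$ and unit vectors $|\Psi_k\rangle$. *)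

theory Defs
  imports "Jordan_Normal_Form.Char_Poly" "Jordan_Normal_Form.DL_Rank"
begin

definition mtrace :: "'a::comm_ring_1 mat \<Rightarrow> 'a" where
  "mtrace A = (\<Sum>i<dim_row A. A $$ (i,i))"

text \<open>Kronecker (tensor) product, standard ordering: index i of A \<otimes> B is
  (i div dim B, i mod dim B).\<close>
definition kron :: "complex mat \<Rightarrow> complex mat \<Rightarrow> complex mat" where
  "kron A B = mat (dim_row A * dim_row B) (dim_col A * dim_col B)
     (\<lambda>(i,j). A $$ (i div dim_row B, j div dim_col B) * B $$ (i mod dim_row B, j mod dim_col B))"

definition ketbra :: "complex vec \<Rightarrow> complex vec \<Rightarrow> complex mat" where
  "ketbra u v = mat (dim_vec u) (dim_vec v) (\<lambda>(i,j). u $ i * cnj (v $ j))"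

definition pauli :: "nat \<Rightarrow> complex mat" where
  "pauli j = (if j = 1 then mat_of_rows_list 2 [[0, 1], [1, 0]]
         else if j = 2 then mat_of_rows_list 2 [[0, - \<i>], [\<i>, 0]]
         else if j = 3 then mat_of_rows_list 2 [[1, 0], [0, -1]]
         else 1\<^sub>m 2)"

fun pauli_string :: "nat \<Rightarrow> (nat \<Rightarrow> nat) \<Rightarrow> complex mat" where
  "pauli_string 0 \<mu> = 1\<^sub>m 1"
| "pauli_string (Suc n) \<mu> = kron (pauli_string n \<mu>) (pauli (\<mu> n))"

text \<open>Local (qubit n) index of the computational basis index a in the N-qubit
  space, consistent with the ordering of pauli_string.\<close>
definition qubit_idx :: "nat \<Rightarrow> nat \<Rightarrow> nat \<Rightarrow> nat" where
  "qubit_idx N a n = (a div 2 ^ (N - 1 - n)) mod 2"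

definition corr_T :: "nat \<Rightarrow> complex mat \<Rightarrow> (nat \<Rightarrow> nat) \<Rightarrow> complex" where
  "corr_T N \<rho> \<mu> = mtrace (\<rho> * pauli_string N \<mu>)"

text \<open>C(rho) = sum over j_1..j_N in {1,2,3} of T_{j_1...j_N}^2 (T is real for Hermitian rho).\<close>
definition length_corr :: "nat \<Rightarrow> complex mat \<Rightarrow> real" where
  "length_corr N \<rho> = (\<Sum>j \<in> {0..<N} \<rightarrow>\<^sub>E {1,2,3}. (Re (corr_T N \<rho> j))\<^sup>2)"

text \<open>The operator S on H \<otimes> H (dimension 2^N * 2^N, index (a,b) = a * 2^N + b, a for
  the first copy, b for the second), S = \<Otimes>_n (\<Sum>_{j=1}^3 sigma_j^(n) \<otimes> sigma_j^(n')),
  qubit n of the first copy paired with qubit n' of the second copy.\<close>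
definition S_op :: "nat \<Rightarrow> complex mat" where
  "S_op N = mat (2 ^ N * 2 ^ N) (2 ^ N * 2 ^ N) (\<lambda>(i,j).
     \<Prod>n<N. \<Sum>k\<in>{1,2,3::nat}.
        pauli k $$ (qubit_idx N (i div 2 ^ N) n, qubit_idx N (j div 2 ^ N) n)
      * pauli k $$ (qubit_idx N (i mod 2 ^ N) n, qubit_idx N (j mod 2 ^ N) n))"

definition density_matrix :: "nat \<Rightarrow> complex mat \<Rightarrow> bool" where
  "density_matrix N \<rho> \<longleftrightarrow> \<rho> \<in> carrier_mat (2 ^ N) (2 ^ N)
     \<and> (\<forall>i < 2 ^ N. \<forall>j < 2 ^ N. \<rho> $$ (j, i) = cnj (\<rho> $$ (i, j)))
     \<and> (\<forall>v \<in> carrier_vec (2 ^ N). Im ((\<rho> *\<^sub>v v) \<bullet>c v) = 0 \<and> Re ((\<rho> *\<^sub>v v) \<bullet>c v) \<ge> 0)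
     \<and> mtrace \<rho> = 1"

definition convex_roof :: "nat \<Rightarrow> complex mat \<Rightarrow> real" where
  "convex_roof N \<rho> = Inf {(\<Sum>k<(m::nat). \<mu> k * length_corr N (ketbra (\<Psi> k) (\<Psi> k))) | m \<mu> \<Psi>.
      (\<forall>k<m. \<mu> k > 0 \<and> \<Psi> k \<in> carrier_vec (2 ^ N) \<and> \<Psi> k \<bullet>c \<Psi> k = 1)
    \<and> (\<Sum>k<m. \<mu> k) = 1
    \<and> \<rho> = mat (2 ^ N) (2 ^ N) (\<lambda>(i,j). \<Sum>k<m. complex_of_real (\<mu> k) * (\<Psi> k $ i) * cnj (\<Psi> k $ j))}"

definition tau_op :: "complex vec \<Rightarrow> complex vec \<Rightarrow> nat \<Rightarrow> complex mat" where
  "tau_op v0 v1 i = (if i = 1 then ketbra v0 v1 + ketbra v1 v0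
                  else if i = 2 then (- \<i>) \<cdot>\<^sub>m ketbra v0 v1 + \<i> \<cdot>\<^sub>m ketbra v1 v0
                  else ketbra v0 v0 - ketbra v1 v1)"

text \<open>W_{ij} = Tr(S (tau_i \<otimes> tau_j)), i,j = 1..3 (stored at 0-based positions i-1, j-1);
  the entries are real, W is regarded as a real 3x3 matrix.\<close>
definition W_mat :: "nat \<Rightarrow> complex vec \<Rightarrow> complex vec \<Rightarrow> real mat" where
  "W_mat N v0 v1 = mat 3 3 (\<lambda>(i,j).
     Re (mtrace (S_op N * kron (tau_op v0 v1 (i+1)) (tau_op v0 v1 (j+1)))))"

definition min_eigenvalue :: "real mat \<Rightarrow> real" where
  "min_eigenvalue A = Min {w. eigenvalue A w}"

end

theory Submission
  imports Defs "HOL-Analysis.Elementary_Topology"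
begin

lemma pauli_carrier[simp]: "pauli k \<in> carrier_mat 2 2"
  unfolding pauli_def by (auto simp: mat_of_rows_list_def)

lemma pauli_dims[simp]: "dim_row (pauli k) = 2" "dim_col (pauli k) = 2"
  using pauli_carrier[of k] by (metis carrier_matD)+

lemma kron_carrier[simp]: "dim_row (kron A B) = dim_row A * dim_row B" "dim_col (kron A B) = dim_col A * dim_col B"
  unfolding kron_def by auto

lemma ps_dims[simp]: "dim_row (pauli_string n \<mu>) = 2^n" "dim_col (pauli_string n \<mu>) = 2^n"
  by (induction n) auto

lemma ps_carrier[simp]: "pauli_string n \<mu> \<in> carrier_mat (2^n) (2^n)"
  by (rule carrier_matI) (simp_all only: ps_dims)
lemma XX: "True"
  by (simp add: carrier_mat_def)

lemma qidx_less: "qubit_idx n a m < 2" unfolding qubit_idx_def by simp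

lemma ps_entry: "a < 2^n \<Longrightarrow> b < 2^n \<Longrightarrow>
  pauli_string n \<mu> $$ (a,b) = (\<Prod>m<n. pauli (\<mu> m) $$ (qubit_idx n a m, qubit_idx n b m))"
proof (induction n arbitrary: a b)
  case 0
  then show ?case by simp
next
  case (Suc n)
  have a: "a div 2 < 2^n" "b div 2 < 2^n" using Suc.prems by (auto simp: less_mult_imp_div_less)
  have q: "m < n \<Longrightarrow> qubit_idx (Suc n) x m = qubit_idx n (x div 2) m" for x m
  proof -
    assume m: "m < n"
    then have e: "n - m = Suc (n - 1 - m)" by simp
    have "x div 2^(n-m) = x div 2 div 2^(n-1-m)" unfolding e by (simp add: div_mult2_eq)
    then show ?thesis unfolding qubit_idx_def by simp
  qed
  have qn: "qubit_idx (Suc n) x n = x mod 2" for x unfolding qubit_idx_def by simp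
  have "pauli_string (Suc n) \<mu> $$ (a,b) = pauli_string n \<mu> $$ (a div 2, b div 2) * pauli (\<mu> n) $$ (a mod 2, b mod 2)"
    using Suc.prems by (simp add: kron_def)
  also have "\<dots> = (\<Prod>m<n. pauli (\<mu> m) $$ (qubit_idx (Suc n) a m, qubit_idx (Suc n) b m)) * pauli (\<mu> n) $$ (qubit_idx (Suc n) a n, qubit_idx (Suc n) b n)"
    using Suc.IH[OF a] by (simp add: q qn)
  finally show ?case by simp
qed

lemma pauli_herm: "x < 2 \<Longrightarrow> y < 2 \<Longrightarrow> cnj (pauli k $$ (x,y)) = pauli k $$ (y,x)"
  unfolding pauli_def 
  by (cases "x = 0"; cases "y = 0") (auto simp: mat_of_rows_list_def less_2_cases_iff)

lemma ps_herm: "a < 2^n \<Longrightarrow> b < 2^n \<Longrightarrow> cnj (pauli_string n \<mu> $$ (a,b)) = pauli_string n \<mu> $$ (b,a)"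
  by (simp add: ps_entry pauli_herm qidx_less)

lemma sum_pairs: fixes f :: "nat \<Rightarrow> 'a::comm_monoid_add" and m d :: nat shows "(\<Sum>i<m*d. f i) = (\<Sum>a<m. \<Sum>b<d. f (a*d+b))"
proof -
  have "(\<Sum>i<m*d. f i) = (\<Sum>a<m. \<Sum> i\<in>{a*d..<a*d+d}. f i)" using sum.nat_group[of f d m] by simp
  also have "\<dots> = (\<Sum>a<m. \<Sum>b<d. f (a*d+b))"
    by (rule sum.cong[OF refl], subst sum.atLeastLessThan_shift_0) (simp add: atLeast0LessThan comp_def)
  finally show ?thesis .
qed

lemma four_sum: fixes X Y :: "_ \<Rightarrow> _ \<Rightarrow> 'c::comm_semiring_0" shows "(\<Sum>a\<in>A. \<Sum>b\<in>B. \<Sum>a'\<in>A'. \<Sum>b'\<in>B'. X a a' * Y b b') = (\<Sum>a\<in>A. \<Sum>a'\<in>A'. X a a') * (\<Sum>b\<in>B. \<Sum>b'\<in>B'. Y b b')"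
  by (simp only: sum_product)

abbreviation JJ :: "nat \<Rightarrow> (nat \<Rightarrow> nat) set" where "JJ N \<equiv> {0..<N} \<rightarrow>\<^sub>E {1,2,3}"

lemma corr_T_expand: assumes "A \<in> carrier_mat (2^N) (2^N)"
  shows "corr_T N A j = (\<Sum>a'<2^N. \<Sum>a<2^N. A $$ (a',a) * pauli_string N j $$ (a,a'))"
  using assms unfolding corr_T_def mtrace_def
  by (auto intro!: sum.cong simp: scalar_prod_def atLeast0LessThan)

lemma idx_lt: "a < (d::nat) \<Longrightarrow> b < d \<Longrightarrow> a*d+b < d*d"
proof -
  assume "a < d" "b < d"
  then have "a*d+b < a*d + d" by simp
  also have "\<dots> = (a+1)*d" by simp
  also have "\<dots> \<le> d*d" using \<open>a<d\<close> by (intro mult_le_mono1) simp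
  finally show ?thesis .
qed

lemma S_entry: assumes "a < 2^N" "b < 2^N" "a' < 2^N" "b' < 2^N"
  shows "S_op N $$ (a*2^N+b, a'*2^N+b') = (\<Sum>j\<in>JJ N. pauli_string N j $$ (a,a') * pauli_string N j $$ (b,b'))"
proof -
  have lt: "a*2^N+b < 2^N*2^N" "a'*2^N+b' < 2^N*2^N"
    using assms by (simp_all add: idx_lt)
  have "S_op N $$ (a*2^N+b, a'*2^N+b') = (\<Prod>n\<in>{..<N}. \<Sum>k\<in>{1,2,3::nat}.
        pauli k $$ (qubit_idx N a n, qubit_idx N a' n) * pauli k $$ (qubit_idx N b n, qubit_idx N b' n))"
    using assms lt unfolding S_op_def by simp
  also have "\<dots> = (\<Sum>g\<in>PiE {..<N} (\<lambda>_. {1,2,3}). \<Prod>n<N.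
        pauli (g n) $$ (qubit_idx N a n, qubit_idx N a' n) * pauli (g n) $$ (qubit_idx N b n, qubit_idx N b' n))"
    by (rule prod_sum_PiE) auto
  also have "\<dots> = (\<Sum>j\<in>JJ N. pauli_string N j $$ (a,a') * pauli_string N j $$ (b,b'))"
    using assms by (simp add: ps_entry prod.distrib lessThan_atLeast0)
  finally show ?thesis .
qed

lemma kron_entry: assumes "A \<in> carrier_mat d d" "B \<in> carrier_mat d d" "a<d" "b<d" "a'<d" "b'<d"
  shows "kron A B $$ (a'*d+b', a*d+b) = A$$(a',a) * B$$(b',b)"
  using assms idx_lt[of a' d b'] idx_lt[of a d b] unfolding kron_def by simp

lemma corr_T_expand': assumes "A \<in> carrier_mat (2^N) (2^N)"
  shows "corr_T N A j = (\<Sum>a<2^N. \<Sum>a'<2^N. pauli_string N j $$ (a,a') * A $$ (a',a))"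
  unfolding corr_T_expand[OF assms] by (subst sum.swap) (simp add: mult.commute)


lemma step1: assumes dS: "dim_row S = d*d" "dim_col S = d*d" and dK: "dim_row K = d*d" "dim_col K = d*d"
 shows "mtrace (S * K) = (\<Sum>i<d*d. \<Sum>l<d*d. S $$ (i,l) * K $$ (l,i))"
proof -
  have "mtrace (S*K) = (\<Sum>i<d*d. (S*K)$$(i,i))" unfolding mtrace_def using dS by simp
  also have "\<dots> = (\<Sum>i<d*d. \<Sum>l<d*d. S $$ (i,l) * K $$ (l,i))"
  proof (rule sum.cong[OF refl])
    fix i assume "i \<in> {..<d*d}"
    then have i: "i < d*d" by simp
    have "(S*K)$$(i,i) = row S i \<bullet> col K i" using i dS dK by simp
    also have "\<dots> = (\<Sum>l\<in>{0..<d*d}. row S i $ l * col K i $ l)" unfolding scalar_prod_def using dK by simp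
    also have "\<dots> = (\<Sum>l<d*d. S $$ (i,l) * K $$ (l,i))" 
      by (rule sum.cong) (use i dS dK in auto)
    finally show "(S*K)$$(i,i) = (\<Sum>l<d*d. S $$ (i,l) * K $$ (l,i))" .
  qed
  finally show ?thesis .
qed
lemma step2: "(\<Sum>i<d*d. \<Sum>l<d*d. f i l) = (\<Sum>a<d. \<Sum>b<d. \<Sum>a'<d. \<Sum>b'<(d::nat). (f (a*d+b) (a'*d+b')))"
    by (simp only: sum_pairs)
lemma trace_S: assumes A: "A \<in> carrier_mat (2^N) (2^N)" and B: "B \<in> carrier_mat (2^N) (2^N)"
  shows "mtrace (S_op N * kron A B) = (\<Sum>j\<in>JJ N. corr_T N A j * corr_T N B j)"
proof -
  define d where "d = (2::nat)^N"
  have A': "A \<in> carrier_mat d d" and B': "B \<in> carrier_mat d d" using A B d_def by auto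
  have dimS: "dim_row (S_op N) = d*d" "dim_col (S_op N) = d*d" unfolding S_op_def d_def by simp_all
  have K: "dim_row (kron A B) = d*d" "dim_col (kron A B) = d*d" using A' B' by simp_all
  have "mtrace (S_op N * kron A B) = (\<Sum>i<d*d. \<Sum>l<d*d. S_op N $$ (i,l) * kron A B $$ (l,i))"
    by (rule step1[OF dimS K])
  also have "\<dots> = (\<Sum>a<d. \<Sum>b<d. \<Sum>a'<d. \<Sum>b'<d. S_op N $$ (a*d+b, a'*d+b') * kron A B $$ (a'*d+b', a*d+b))"
    by (rule step2)
  also have "\<dots> = (\<Sum>a<d. \<Sum>b<d. \<Sum>a'<d. \<Sum>b'<d. \<Sum>j\<in>JJ N.
      (pauli_string N j $$ (a,a') * A$$(a',a)) * (pauli_string N j $$ (b,b') * B$$(b',b)))"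
    by (intro sum.cong refl) (simp add: d_def S_entry kron_entry[OF A B] sum_distrib_left sum_distrib_right mult_ac)
  also have "\<dots> = (\<Sum>a<d. \<Sum>b<d. \<Sum>a'<d. \<Sum>j\<in>JJ N. \<Sum>b'<d.
      (pauli_string N j $$ (a,a') * A$$(a',a)) * (pauli_string N j $$ (b,b') * B$$(b',b)))"
    by (rule sum.cong[OF refl], rule sum.cong[OF refl], rule sum.cong[OF refl], rule sum.swap)
  also have "\<dots> = (\<Sum>a<d. \<Sum>b<d. \<Sum>j\<in>JJ N. \<Sum>a'<d. \<Sum>b'<d.
      (pauli_string N j $$ (a,a') * A$$(a',a)) * (pauli_string N j $$ (b,b') * B$$(b',b)))"
    by (rule sum.cong[OF refl], rule sum.cong[OF refl], rule sum.swap)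
  also have "\<dots> = (\<Sum>a<d. \<Sum>j\<in>JJ N. \<Sum>b<d. \<Sum>a'<d. \<Sum>b'<d.
      (pauli_string N j $$ (a,a') * A$$(a',a)) * (pauli_string N j $$ (b,b') * B$$(b',b)))"
    by (rule sum.cong[OF refl], rule sum.swap)
  also have "\<dots> = (\<Sum>j\<in>JJ N. \<Sum>a<d. \<Sum>b<d. \<Sum>a'<d. \<Sum>b'<d.
      (pauli_string N j $$ (a,a') * A$$(a',a)) * (pauli_string N j $$ (b,b') * B$$(b',b)))"
    by (rule sum.swap)
  also have "\<dots> = (\<Sum>j\<in>JJ N. corr_T N A j * corr_T N B j)"
    by (rule sum.cong[OF refl]) (simp only: four_sum corr_T_expand'[OF A] corr_T_expand'[OF B] d_def)
  finally show ?thesis .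
qed

lemma sum2: "(\<Sum>a<(2::nat). f a) = f 0 + f 1"
  by (simp add: numeral_2_eq_2)

lemma swap4: "(\<Sum>i\<in>I. \<Sum>l\<in>L. \<Sum>p\<in>P. \<Sum>q\<in>Q. f i l p q) = (\<Sum>p\<in>P. \<Sum>q\<in>Q. \<Sum>i\<in>I. \<Sum>l\<in>L. f i l p q)"
proof -
  have "(\<Sum>i\<in>I. \<Sum>l\<in>L. \<Sum>p\<in>P. \<Sum>q\<in>Q. f i l p q) = (\<Sum>i\<in>I. \<Sum>p\<in>P. \<Sum>l\<in>L. \<Sum>q\<in>Q. f i l p q)"
    by (rule sum.cong[OF refl], rule sum.swap)
  also have "\<dots> = (\<Sum>p\<in>P. \<Sum>i\<in>I. \<Sum>l\<in>L. \<Sum>q\<in>Q. f i l p q)" by (rule sum.swap)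
  also have "\<dots> = (\<Sum>p\<in>P. \<Sum>i\<in>I. \<Sum>q\<in>Q. \<Sum>l\<in>L. f i l p q)"
    by (rule sum.cong[OF refl], rule sum.cong[OF refl], rule sum.swap)
  also have "\<dots> = (\<Sum>p\<in>P. \<Sum>q\<in>Q. \<Sum>i\<in>I. \<Sum>l\<in>L. f i l p q)"
    by (rule sum.cong[OF refl], rule sum.swap)
  finally show ?thesis .
qed

lemma lin0: fixes H :: "_ \<Rightarrow> _ \<Rightarrow> _ \<Rightarrow> _ \<Rightarrow> 'c::comm_semiring_0"
  shows "(\<Sum>i\<in>I. \<Sum>l\<in>L. (\<Sum>p\<in>P. \<Sum>q\<in>Q. H p q i l) * g i l) = (\<Sum>p\<in>P. \<Sum>q\<in>Q. \<Sum>i\<in>I. \<Sum>l\<in>L. H p q i l * g i l)"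
proof -
  have "(\<Sum>i\<in>I. \<Sum>l\<in>L. (\<Sum>p\<in>P. \<Sum>q\<in>Q. H p q i l) * g i l) = (\<Sum>i\<in>I. \<Sum>l\<in>L. \<Sum>p\<in>P. \<Sum>q\<in>Q. H p q i l * g i l)"
    by (simp only: sum_distrib_right)
  also have "\<dots> = (\<Sum>p\<in>P. \<Sum>q\<in>Q. \<Sum>i\<in>I. \<Sum>l\<in>L. H p q i l * g i l)" by (rule swap4)
  finally show ?thesis .
qed

lemma lin1: fixes H :: "_ \<Rightarrow> _ \<Rightarrow> _ \<Rightarrow> 'c::comm_semiring_0"
  shows "(\<Sum>i\<in>I. \<Sum>l\<in>L. f i * (\<Sum>k\<in>K. H k i l) * g l) = (\<Sum>k\<in>K. \<Sum>i\<in>I. \<Sum>l\<in>L. f i * H k i l * g l)"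
proof -
  have "(\<Sum>i\<in>I. \<Sum>l\<in>L. f i * (\<Sum>k\<in>K. H k i l) * g l) = (\<Sum>i\<in>I. \<Sum>l\<in>L. \<Sum>k\<in>K. f i * H k i l * g l)"
    by (simp only: sum_distrib_right sum_distrib_left)
  also have "\<dots> = (\<Sum>i\<in>I. \<Sum>k\<in>K. \<Sum>l\<in>L. f i * H k i l * g l)"
    by (rule sum.cong[OF refl], rule sum.swap)
  also have "\<dots> = (\<Sum>k\<in>K. \<Sum>i\<in>I. \<Sum>l\<in>L. f i * H k i l * g l)" by (rule sum.swap)
  finally show ?thesis .
qed

lemma lin2: fixes H :: "_ \<Rightarrow> _ \<Rightarrow> _ \<Rightarrow> _ \<Rightarrow> 'c::comm_semiring_0"
  shows "(\<Sum>i\<in>I. \<Sum>l\<in>L. f i * (\<Sum>p\<in>P. \<Sum>q\<in>Q. H p q i l) * g l) = (\<Sum>p\<in>P. \<Sum>q\<in>Q. \<Sum>i\<in>I. \<Sum>l\<in>L. f i * H p q i l * g l)"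
proof -
  have "(\<Sum>i\<in>I. \<Sum>l\<in>L. f i * (\<Sum>p\<in>P. \<Sum>q\<in>Q. H p q i l) * g l) = (\<Sum>i\<in>I. \<Sum>l\<in>L. \<Sum>p\<in>P. \<Sum>q\<in>Q. f i * H p q i l * g l)"
    by (simp only: sum_distrib_right sum_distrib_left)
  also have "\<dots> = (\<Sum>p\<in>P. \<Sum>q\<in>Q. \<Sum>i\<in>I. \<Sum>l\<in>L. f i * H p q i l * g l)" by (rule swap4)
  finally show ?thesis .
qed

lemma pull2: fixes a b :: "'c::comm_semiring_0"
  shows "(\<Sum>i\<in>I. \<Sum>l\<in>L. f i * (a * u i * w l) * g l) = a * (\<Sum>i\<in>I. f i * u i) * (\<Sum>l\<in>L. w l * g l)"
  by (simp add: sum_distrib_left sum_distrib_right mult_ac)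

lemma mtrace_mult: assumes dS: "dim_row S = n" "dim_col S = n" and dK: "dim_row K = n" "dim_col K = n"
 shows "mtrace (S * K) = (\<Sum>i<n. \<Sum>l<n. S $$ (i,l) * K $$ (l,i))"
proof -
  have "mtrace (S*K) = (\<Sum>i<n. (S*K)$$(i,i))" unfolding mtrace_def using dS by simp
  also have "\<dots> = (\<Sum>i<n. \<Sum>l<n. S $$ (i,l) * K $$ (l,i))"
  proof (rule sum.cong[OF refl])
    fix i assume "i \<in> {..<n}"
    then have i: "i < n" by simp
    have "(S*K)$$(i,i) = row S i \<bullet> col K i" using i dS dK by simp
    also have "\<dots> = (\<Sum>l\<in>{0..<n}. row S i $ l * col K i $ l)" unfolding scalar_prod_def using dK by simp
    also have "\<dots> = (\<Sum>l<n. S $$ (i,l) * K $$ (l,i))" 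
      by (rule sum.cong) (use i dS dK in auto)
    finally show "(S*K)$$(i,i) = (\<Sum>l<n. S $$ (i,l) * K $$ (l,i))" .
  qed
  finally show ?thesis .
qed

lemma cdot_sum: "w \<in> carrier_vec n \<Longrightarrow> u \<bullet>c w = (\<Sum>i<n. u $ i * cnj (w $ i))"
  unfolding scalar_prod_def by (auto simp: atLeast0LessThan intro!: sum.cong)

definition bm :: "real \<Rightarrow> real \<Rightarrow> real \<Rightarrow> nat \<Rightarrow> nat \<Rightarrow> complex" where
  "bm x1 x2 x3 p q = (if p = 0 \<and> q = 0 then Complex ((1+x3)/2) 0
     else if p = 0 then Complex (x1/2) (-x2/2)
     else if q = 0 then Complex (x1/2) (x2/2) else Complex ((1-x3)/2) 0)"

lemma herm2: assumes h: "\<And>p q. p < 2 \<Longrightarrow> q < 2 \<Longrightarrow> cnj (c p q) = c q p" and tr: "c 0 0 + c 1 1 = 1"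
  and "p < 2" "q < 2"
  shows "c p q = bm (2 * Re (c 1 0)) (2 * Im (c 1 0)) (Re (c 0 0 - c 1 1)) p q"
proof -
  have i0: "Im (c 0 0) = 0" using arg_cong[OF h[of 0 0], of Im] by simp
  have i1: "Im (c 1 1) = 0" using arg_cong[OF h[of 1 1], of Im] by simp
  have r: "Re (c 0 0) + Re (c 1 1) = 1" using tr by (metis one_complex.simps(1) plus_complex.simps(1))
  have c01: "c 0 1 = cnj (c 1 0)" using h[of 1 0] by simp
  show ?thesis using assms(3,4) i0 i1 r c01
    by (auto simp: bm_def complex_eq_iff less_2_cases_iff)
qed

locale onb =
  fixes N :: nat and v0 v1 :: "complex vec"
  assumes v0: "v0 \<in> carrier_vec (2^N)" and v1: "v1 \<in> carrier_vec (2^N)"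
    and o00: "v0 \<bullet>c v0 = 1" and o11: "v1 \<bullet>c v1 = 1" and o01: "v0 \<bullet>c v1 = 0"
begin

definition vs :: "nat \<Rightarrow> complex vec" where "vs a = (if a = 0 then v0 else v1)"

lemma vs_carrier: "vs a \<in> carrier_vec (2^N)" using v0 v1 by (simp add: vs_def)

lemma ip: assumes "a < 2" "b < 2" shows "(\<Sum>i<2^N. vs a $ i * cnj (vs b $ i)) = (if a = b then 1 else 0)"
proof -
  have e: "(\<Sum>i<2^N. vs a $ i * cnj (vs b $ i)) = vs a \<bullet>c vs b" by (rule cdot_sum[OF vs_carrier, symmetric])
  have o10: "v1 \<bullet>c v0 = 0"
  proof -
    have "v1 \<bullet>c v0 = cnj (v0 \<bullet>c v1)" using v0 v1 by (simp add: cdot_sum mult.commute)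
    then show ?thesis using o01 by simp
  qed
  show ?thesis unfolding e using assms o00 o11 o01 o10 by (auto simp: vs_def less_2_cases_iff)
qed

lemma ip': assumes "a < 2" "b < 2" shows "(\<Sum>i<2^N. cnj (vs a $ i) * vs b $ i) = (if a = b then 1 else 0)"
  using ip[OF assms(2,1)] by (simp add: mult.commute)

definition blm :: "(nat \<Rightarrow> nat \<Rightarrow> complex) \<Rightarrow> complex mat" where
  "blm c = mat (2^N) (2^N) (\<lambda>(i,l). \<Sum>p<2. \<Sum>q<2. c p q * vs p $ i * cnj (vs q $ l))"

lemma blm_carrier: "blm c \<in> carrier_mat (2^N) (2^N)" unfolding blm_def by simp

lemma blm_index: "i < 2^N \<Longrightarrow> l < 2^N \<Longrightarrow> blm c $$ (i,l) = (\<Sum>p<2. \<Sum>q<2. c p q * vs p $ i * cnj (vs q $ l))"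
  unfolding blm_def by simp

lemma delta_sum: "a < 2 \<Longrightarrow> b < 2 \<Longrightarrow> (\<Sum>p<(2::nat). \<Sum>q<(2::nat). c p q * (if a = p then 1 else 0) * (if q = b then 1 else 0)) = (c a b :: complex)"
  by (auto simp: sum2 less_2_cases_iff)

lemma blm_coeff: assumes "a < 2" "b < 2"
  shows "(\<Sum>i<2^N. \<Sum>l<2^N. cnj (vs a $ i) * blm c $$ (i,l) * vs b $ l) = c a b"
proof -
  have "(\<Sum>i<2^N. \<Sum>l<2^N. cnj (vs a $ i) * blm c $$ (i,l) * vs b $ l)
     = (\<Sum>i<2^N. \<Sum>l<2^N. cnj (vs a $ i) * (\<Sum>p<2. \<Sum>q<2. c p q * vs p $ i * cnj (vs q $ l)) * vs b $ l)"
    by (simp add: blm_index)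
  also have "\<dots> = (\<Sum>p<2. \<Sum>q<2. \<Sum>i<2^N. \<Sum>l<2^N. cnj (vs a $ i) * (c p q * vs p $ i * cnj (vs q $ l)) * vs b $ l)"
    by (rule lin2)
  also have "\<dots> = (\<Sum>p<2. \<Sum>q<2. c p q * (\<Sum>i<2^N. cnj (vs a $ i) * vs p $ i) * (\<Sum>l<2^N. cnj (vs q $ l) * vs b $ l))"
    by (simp only: pull2)
  also have "\<dots> = (\<Sum>p<(2::nat). \<Sum>q<(2::nat). c p q * (if a = p then 1 else 0) * (if q = b then 1 else 0))"
    using assms by (intro sum.cong refl) (simp add: ip')
  also have "\<dots> = c a b" using assms by (rule delta_sum)
  finally show ?thesis .
qed

lemma blm_eqD: assumes "blm c = blm c'" "p < 2" "q < 2" shows "c p q = c' p q"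
  using blm_coeff[OF assms(2,3), of c] blm_coeff[OF assms(2,3), of c'] assms(1) by simp

lemma blm_cong: assumes "\<And>p q. p < 2 \<Longrightarrow> q < 2 \<Longrightarrow> c p q = c' p q" shows "blm c = blm c'"
  unfolding blm_def using assms by (intro cong_mat refl) (auto intro!: sum.cong)


lemma ketbra_index: "i < dim_vec u \<Longrightarrow> j < dim_vec v \<Longrightarrow> ketbra u v $$ (i,j) = u$i * cnj (v$j)"
  unfolding ketbra_def by simp

lemma ketbra_dims[simp]: "dim_row (ketbra u v) = dim_vec u" "dim_col (ketbra u v) = dim_vec v"
  unfolding ketbra_def by simp_all

definition tc :: "nat \<Rightarrow> nat \<Rightarrow> nat \<Rightarrow> complex" where
  "tc i p q = (if i = 1 then (if p \<noteq> q then 1 else 0)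
      else if i = 2 then (if p = 0 \<and> q = 1 then - \<i> else if p = 1 \<and> q = 0 then \<i> else 0)
      else (if p = q then (if p = 0 then 1 else -1) else 0))"

lemma tau_blm: "tau_op v0 v1 i = blm (tc i)"
proof (rule eq_matI)
  have dv: "dim_vec v0 = 2^N" "dim_vec v1 = 2^N" using v0 v1 by auto
  show "dim_row (tau_op v0 v1 i) = dim_row (blm (tc i))" "dim_col (tau_op v0 v1 i) = dim_col (blm (tc i))"
    using dv by (simp_all add: tau_op_def blm_def)
  fix a b assume "a < dim_row (blm (tc i))" "b < dim_col (blm (tc i))"
  then have ab: "a < 2^N" "b < 2^N" by (simp_all add: blm_def)
  show "tau_op v0 v1 i $$ (a, b) = blm (tc i) $$ (a, b)"
    using ab dv by (simp add: tau_op_def blm_index ketbra_index sum2 vs_def tc_def algebra_simps)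
qed

definition hh :: "(nat \<Rightarrow> nat) \<Rightarrow> nat \<Rightarrow> nat \<Rightarrow> complex" where
  "hh j p q = (\<Sum>a'<2^N. \<Sum>a<2^N. vs p $ a' * cnj (vs q $ a) * pauli_string N j $$ (a,a'))"

lemma corr_T_blm: "corr_T N (blm c) j = (\<Sum>p<2. \<Sum>q<2. c p q * hh j p q)"
proof -
  have "corr_T N (blm c) j = (\<Sum>a'<2^N. \<Sum>a<2^N. (\<Sum>p<2. \<Sum>q<2. c p q * vs p $ a' * cnj (vs q $ a)) * pauli_string N j $$ (a,a'))"
    by (simp add: corr_T_expand[OF blm_carrier] blm_index)
  also have "\<dots> = (\<Sum>p<2. \<Sum>q<2. \<Sum>a'<2^N. \<Sum>a<2^N. c p q * vs p $ a' * cnj (vs q $ a) * pauli_string N j $$ (a,a'))"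
    by (rule lin0)
  also have "\<dots> = (\<Sum>p<2. \<Sum>q<2. c p q * hh j p q)"
    unfolding hh_def by (simp add: sum_distrib_left mult.assoc)
  finally show ?thesis .
qed

lemma hh_herm: "cnj (hh j p q) = hh j q p"
proof -
  have "cnj (hh j p q) = (\<Sum>a'<2^N. \<Sum>a<2^N. cnj (vs p $ a') * vs q $ a * pauli_string N j $$ (a',a))"
    unfolding hh_def by (simp add: ps_herm)
  also have "\<dots> = (\<Sum>a<2^N. \<Sum>a'<2^N. cnj (vs p $ a') * vs q $ a * pauli_string N j $$ (a',a))"
    by (rule sum.swap)
  also have "\<dots> = hh j q p" unfolding hh_def by (simp add: mult_ac)
  finally show ?thesis .
qed

definition Pj :: "(nat \<Rightarrow> nat) \<Rightarrow> real" where "Pj j = Re (hh j 0 0 + hh j 1 1)"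
definition tj :: "nat \<Rightarrow> (nat \<Rightarrow> nat) \<Rightarrow> real" where "tj i j = Re (corr_T N (tau_op v0 v1 i) j)"

lemma tj_expand: "tj 1 j = Re (hh j 0 1 + hh j 1 0)" "tj 2 j = Im (hh j 0 1) - Im (hh j 1 0)"
  "tj 3 j = Re (hh j 0 0 - hh j 1 1)"
  unfolding tj_def tau_blm corr_T_blm by (simp_all add: sum2 tc_def)

lemma Im_corr_tau: "i \<in> {1,2,3} \<Longrightarrow> Im (corr_T N (tau_op v0 v1 i) j) = 0"
proof -
  have a: "Im (hh j 0 0) = 0" "Im (hh j 1 1) = 0" "hh j 1 0 = cnj (hh j 0 1)"
    using arg_cong[OF hh_herm[of j 0 0], of Im] arg_cong[OF hh_herm[of j 1 1], of Im] hh_herm[of j 0 1]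
    by simp_all
  assume "i \<in> {1,2,3}"
  then show ?thesis unfolding tau_blm corr_T_blm using a by (auto simp: sum2 tc_def)
qed

lemma Re_corr_bm: "Re (corr_T N (blm (bm x1 x2 x3)) j) = (Pj j + x1 * tj 1 j + x2 * tj 2 j + x3 * tj 3 j) / 2"
  unfolding corr_T_blm tj_expand Pj_def by (simp add: sum2 bm_def field_simps)

lemma length_corr_bm: "length_corr N (blm (bm x1 x2 x3)) = (\<Sum>j\<in>JJ N. ((Pj j + x1 * tj 1 j + x2 * tj 2 j + x3 * tj 3 j) / 2)^2)"
  unfolding length_corr_def Re_corr_bm ..

lemma W_eq: "W_mat N v0 v1 = mat 3 3 (\<lambda>(i,l). \<Sum>j\<in>JJ N. tj (i+1) j * tj (l+1) j)"
proof (rule eq_matI)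
  fix i l assume "i < dim_row (mat 3 3 (\<lambda>(i,l). \<Sum>j\<in>JJ N. tj (i+1) j * tj (l+1) j))"
     "l < dim_col (mat 3 3 (\<lambda>(i,l). \<Sum>j\<in>JJ N. tj (i+1) j * tj (l+1) j))"
  then have il: "i < 3" "l < 3" by auto
  then have il': "i+1 \<in> {1,2,3}" "l+1 \<in> {1,2,3}" by auto
  have "W_mat N v0 v1 $$ (i,l) = Re (mtrace (S_op N * kron (tau_op v0 v1 (i+1)) (tau_op v0 v1 (l+1))))"
    using il unfolding W_mat_def by simp
  also have "\<dots> = Re (\<Sum>j\<in>JJ N. corr_T N (tau_op v0 v1 (i+1)) j * corr_T N (tau_op v0 v1 (l+1)) j)"
    by (simp add: trace_S tau_blm blm_carrier)
  also have "\<dots> = (\<Sum>j\<in>JJ N. tj (i+1) j * tj (l+1) j)"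
    unfolding Re_sum tj_def using Im_corr_tau[OF il'(1)] Im_corr_tau[OF il'(2)] by simp
  finally show "W_mat N v0 v1 $$ (i,l) = mat 3 3 (\<lambda>(i,l). \<Sum>j\<in>JJ N. tj (i+1) j * tj (l+1) j) $$ (i,l)"
    using il by simp
qed (simp_all add: W_mat_def)

end

lemma bm_tr2: "(\<Sum>p<(2::nat). \<Sum>q<(2::nat). bm x1 x2 x3 p q * bm y1 y2 y3 q p) = complex_of_real ((1 + x1*y1 + x2*y2 + x3*y3)/2)"
  by (simp add: sum2 bm_def complex_eq_iff field_simps)

lemma state_exists: assumes "m1^2 + m2^2 + m3^2 = (1::real)"
  shows "\<exists>y. \<forall>p<2. \<forall>q<2. y p * cnj (y q) = bm m1 m2 m3 p q"
proof (cases "m3 = -1")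
  case True
  then have "m1^2 + m2^2 = 0" using assms by simp
  then have "m1 = 0" "m2 = 0" by (simp_all add: sum_power2_eq_zero_iff)
  then show ?thesis using True
    by (intro exI[of _ "\<lambda>p. if p = 0 then 0 else 1"]) (auto simp: bm_def less_2_cases_iff complex_eq_iff)
next
  case False
  have "m3^2 \<le> 1" using assms zero_le_power2[of m1] zero_le_power2[of m2] by linarith
  then have "\<bar>m3\<bar> \<le> 1" by (simp add: abs_square_le_1)
  then have m3: "m3 \<ge> -1" by linarith
  with False have pos: "(1 + m3)/2 > 0" by simp
  define s where "s = sqrt ((1+m3)/2)"
  have s: "s > 0" "s^2 = (1+m3)/2" using pos by (simp_all add: s_def)
  define y where "y = (\<lambda>p::nat. if p = 0 then complex_of_real s else Complex (m1/(2*s)) (m2/(2*s)))"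
  have k: "(m1/(2*s))^2 + (m2/(2*s))^2 = (1 - m3)/2"
  proof -
    have "(m1/(2*s))^2 + (m2/(2*s))^2 = (m1^2 + m2^2) / (4 * s^2)" by (simp add: power_divide power_mult_distrib add_divide_distrib)
    also have "\<dots> = (1 - m3^2) / (2 * (1 + m3))"
    proof -
      have a: "4*s^2 = 2*(1+m3)" using s(2) by simp
      have b: "m1^2+m2^2 = 1 - m3^2" using assms by linarith
      show ?thesis by (simp only: a b)
    qed
    also have "\<dots> = (1 - m3)/2" using pos by (simp add: field_simps power2_eq_square)
    finally show ?thesis .
  qed
  have "\<forall>p<2. \<forall>q<2. y p * cnj (y q) = bm m1 m2 m3 p q"
    using s k by (auto simp: y_def bm_def less_2_cases_iff complex_eq_iff power2_eq_square)
  then show ?thesis by blast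
qed

lemma pure_bloch: assumes "y 0 * cnj (y 0) + y 1 * cnj (y 1) = 1"
  shows "(\<forall>p<2. \<forall>q<2. y p * cnj (y q) = bm (2 * Re (y 1 * cnj (y 0))) (2 * Im (y 1 * cnj (y 0))) (Re (y 0 * cnj (y 0) - y 1 * cnj (y 1))) p q)
    \<and> (2 * Re (y 1 * cnj (y 0)))^2 + (2 * Im (y 1 * cnj (y 0)))^2 + (Re (y 0 * cnj (y 0) - y 1 * cnj (y 1)))^2 = 1"
proof -
  define c where "c = (\<lambda>p q. y p * cnj (y q))"
  define n1 where "n1 = 2 * Re (y 1 * cnj (y 0))"
  define n2 where "n2 = 2 * Im (y 1 * cnj (y 0))"
  define n3 where "n3 = Re (y 0 * cnj (y 0) - y 1 * cnj (y 1))"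
  have h: "cnj (c p q) = c q p" for p q by (simp add: c_def mult.commute)
  have tr: "c 0 0 + c 1 1 = 1" using assms by (simp add: c_def)
  have eq0: "c p q = bm n1 n2 n3 p q" if "p<2" "q<2" for p q
    using herm2[of c p q, OF h tr that] unfolding n1_def n2_def n3_def c_def by simp
  have "(\<Sum>p<(2::nat). \<Sum>q<(2::nat). c p q * c q p) = (\<Sum>p<(2::nat). c p p) * (\<Sum>q<(2::nat). c q q)"
    unfolding c_def by (simp add: sum_product mult_ac)
  also have "\<dots> = 1" using tr by (simp add: sum2)
  finally have one: "(\<Sum>p<(2::nat). \<Sum>q<(2::nat). c p q * c q p) = 1" .
  have "(\<Sum>p<(2::nat). \<Sum>q<(2::nat). c p q * c q p) = (\<Sum>p<(2::nat). \<Sum>q<(2::nat). bm n1 n2 n3 p q * bm n1 n2 n3 q p)"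
    by (intro sum.cong refl) (simp add: eq0)
  also have "\<dots> = complex_of_real ((1 + n1*n1 + n2*n2 + n3*n3)/2)" by (rule bm_tr2)
  finally have "complex_of_real ((1 + n1*n1 + n2*n2 + n3*n3)/2) = 1" using one by simp
  then have "(1 + n1*n1 + n2*n2 + n3*n3)/2 = 1" by (metis of_real_eq_1_iff)
  then have "n1^2 + n2^2 + n3^2 = 1" by (simp add: power2_eq_square)
  moreover have "\<forall>p<2. \<forall>q<2. y p * cnj (y q) = bm n1 n2 n3 p q" using eq0 unfolding c_def by blast
  ultimately show ?thesis unfolding n1_def n2_def n3_def by blast
qed

lemma sum_pull3: fixes f :: "_ \<Rightarrow> _ \<Rightarrow> 'c::comm_semiring_0"
  shows "(\<Sum>i\<in>I. \<Sum>p\<in>P. \<Sum>q\<in>Q. f p q * g p q i) = (\<Sum>p\<in>P. \<Sum>q\<in>Q. f p q * (\<Sum>i\<in>I. g p q i))"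
proof -
  have "(\<Sum>i\<in>I. \<Sum>p\<in>P. \<Sum>q\<in>Q. f p q * g p q i) = (\<Sum>p\<in>P. \<Sum>i\<in>I. \<Sum>q\<in>Q. f p q * g p q i)" by (rule sum.swap)
  also have "\<dots> = (\<Sum>p\<in>P. \<Sum>q\<in>Q. \<Sum>i\<in>I. f p q * g p q i)" by (rule sum.cong[OF refl], rule sum.swap)
  finally show ?thesis by (simp add: sum_distrib_left)
qed

lemma G4: fixes M :: "_ \<Rightarrow> _ \<Rightarrow> 'c::comm_semiring_0"
  shows "(\<Sum>i\<in>I. \<Sum>l\<in>L. (\<Sum>p\<in>P. F p i) * M i l * (\<Sum>q\<in>Q. G q l)) = (\<Sum>p\<in>P. \<Sum>q\<in>Q. \<Sum>i\<in>I. \<Sum>l\<in>L. F p i * M i l * G q l)"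
proof -
  have "(\<Sum>i\<in>I. \<Sum>l\<in>L. (\<Sum>p\<in>P. F p i) * M i l * (\<Sum>q\<in>Q. G q l)) = (\<Sum>i\<in>I. \<Sum>l\<in>L. \<Sum>p\<in>P. \<Sum>q\<in>Q. F p i * M i l * G q l)"
    proof -
    have "(\<Sum>i\<in>I. \<Sum>l\<in>L. (\<Sum>p\<in>P. F p i) * M i l * (\<Sum>q\<in>Q. G q l)) = (\<Sum>i\<in>I. \<Sum>l\<in>L. \<Sum>q\<in>Q. \<Sum>p\<in>P. F p i * M i l * G q l)"
      by (simp only: sum_distrib_right sum_distrib_left)
    also have "\<dots> = (\<Sum>i\<in>I. \<Sum>l\<in>L. \<Sum>p\<in>P. \<Sum>q\<in>Q. F p i * M i l * G q l)"
      by (rule sum.cong[OF refl], rule sum.cong[OF refl], rule sum.swap)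
    finally show ?thesis .
  qed
  also have "\<dots> = (\<Sum>p\<in>P. \<Sum>q\<in>Q. \<Sum>i\<in>I. \<Sum>l\<in>L. F p i * M i l * G q l)" by (rule swap4)
  finally show ?thesis .
qed

lemma pull2': fixes a b :: "'c::comm_semiring_0"
  shows "(\<Sum>i\<in>I. \<Sum>l\<in>L. (a * f i) * M i l * (b * g l)) = a * b * (\<Sum>i\<in>I. \<Sum>l\<in>L. f i * M i l * g l)"
  by (simp add: sum_distrib_left mult_ac)

context onb begin

lemma blm_trace: "mtrace (blm c) = c 0 0 + c 1 1"
proof -
  have "mtrace (blm c) = (\<Sum>i<2^N. \<Sum>p<2. \<Sum>q<2. c p q * (vs p $ i * cnj (vs q $ i)))"
    unfolding mtrace_def by (simp add: blm_index blm_def mult.assoc)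
  also have "\<dots> = (\<Sum>p<2. \<Sum>q<2. c p q * (\<Sum>i<2^N. vs p $ i * cnj (vs q $ i)))" by (rule sum_pull3)
  also have "\<dots> = c 0 0 + c 1 1" by (simp add: sum2 ip)
  finally show ?thesis .
qed

lemma blm_sq_trace: "mtrace (blm c * blm c) = (\<Sum>p<2. \<Sum>q<2. c p q * c q p)"
proof -
  have d: "dim_row (blm c) = 2^N" "dim_col (blm c) = 2^N" by (simp_all add: blm_def)
  have "mtrace (blm c * blm c) = (\<Sum>i<2^N. \<Sum>l<2^N. blm c $$ (i,l) * blm c $$ (l,i))"
    by (rule mtrace_mult[OF d d])
  also have "\<dots> = (\<Sum>i<2^N. \<Sum>l<2^N. (\<Sum>p<2. \<Sum>q<2. c p q * vs p $ i * cnj (vs q $ l)) * blm c $$ (l,i))"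
    by (intro sum.cong refl) (simp add: blm_index)
  also have "\<dots> = (\<Sum>p<2. \<Sum>q<2. \<Sum>i<2^N. \<Sum>l<2^N. c p q * vs p $ i * cnj (vs q $ l) * blm c $$ (l,i))"
    by (rule lin0)
  also have "\<dots> = (\<Sum>p<2. \<Sum>q<2. c p q * (\<Sum>l<2^N. \<Sum>i<2^N. cnj (vs q $ l) * blm c $$ (l,i) * vs p $ i))"
    by (intro sum.cong refl) (subst sum.swap, simp add: sum_distrib_left mult_ac)
  also have "\<dots> = (\<Sum>p<2. \<Sum>q<2. c p q * c q p)"
    by (intro sum.cong refl) (simp add: blm_coeff)
  finally show ?thesis .
qed

end

lemma mv_unit: fixes A :: "'a::comm_ring_1 mat" assumes "A \<in> carrier_mat n n" "i < n" "l < n"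
  shows "(A *\<^sub>v unit_vec n l) $ i = A $$ (i,l)"
proof -
  have "(A *\<^sub>v unit_vec n l) $ i = (\<Sum>k\<in>{0..<n}. row A i $ k * unit_vec n l $ k)"
    using assms by (simp add: scalar_prod_def)
  also have "\<dots> = (\<Sum>k\<in>{0..<n}. if k = l then A $$ (i,l) else 0)"
    using assms by (intro sum.cong refl) auto
  also have "\<dots> = A $$ (i,l)" using assms by simp
  finally show ?thesis .
qed

lemma lin_s: fixes c :: "_ \<Rightarrow> 'c::comm_semiring_0"
  shows "(\<Sum>k\<in>K. f k * (\<Sum>p\<in>P. c p * g p k)) = (\<Sum>p\<in>P. c p * (\<Sum>k\<in>K. f k * g p k))"
proof -
  have "(\<Sum>k\<in>K. f k * (\<Sum>p\<in>P. c p * g p k)) = (\<Sum>k\<in>K. \<Sum>p\<in>P. c p * (f k * g p k))"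
    by (simp add: sum_distrib_left mult_ac)
  also have "\<dots> = (\<Sum>p\<in>P. \<Sum>k\<in>K. c p * (f k * g p k))" by (rule sum.swap)
  also have "\<dots> = (\<Sum>p\<in>P. c p * (\<Sum>k\<in>K. f k * g p k))" by (simp add: sum_distrib_left)
  finally show ?thesis .
qed

context onb begin

lemma quad: assumes "x = y 0 \<cdot>\<^sub>v v0 + y 1 \<cdot>\<^sub>v v1"
  shows "(blm c *\<^sub>v x) \<bullet>c x = (\<Sum>p<2. \<Sum>q<2. cnj (y p) * y q * c p q)"
proof -
  have xc: "x \<in> carrier_vec (2^N)" using assms v0 v1 by simp
  have xi: "x $ l = (\<Sum>q<2. y q * vs q $ l)" if "l < 2^N" for l
    using assms that v0 v1 by (simp add: sum2 vs_def)
  have "(blm c *\<^sub>v x) \<bullet>c x = (\<Sum>i<2^N. (blm c *\<^sub>v x) $ i * cnj (x $ i))" by (rule cdot_sum[OF xc])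
  also have "\<dots> = (\<Sum>i<2^N. \<Sum>l<2^N. cnj (x $ i) * blm c $$ (i,l) * x $ l)"
  proof (rule sum.cong[OF refl])
    fix i :: nat assume "i \<in> {..<2^N}"
    then have i: "i < 2^N" by simp
    have "(blm c *\<^sub>v x) $ i = (\<Sum>l\<in>{0..<2^N}. row (blm c) i $ l * x $ l)"
      using i xc by (simp add: scalar_prod_def blm_def)
    also have "\<dots> = (\<Sum>l<2^N. blm c $$ (i,l) * x $ l)"
      using i by (intro sum.cong) (auto simp: blm_def)
    finally show "(blm c *\<^sub>v x) $ i * cnj (x $ i) = (\<Sum>l<2^N. cnj (x $ i) * blm c $$ (i,l) * x $ l)"
      by (simp add: sum_distrib_right sum_distrib_left mult_ac)
  qed
  also have "\<dots> = (\<Sum>i<2^N. \<Sum>l<2^N. (\<Sum>p<2. cnj (y p) * cnj (vs p $ i)) * blm c $$ (i,l) * (\<Sum>q<2. y q * vs q $ l))"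
    by (intro sum.cong refl) (simp add: xi)
  also have "\<dots> = (\<Sum>p<2. \<Sum>q<2. \<Sum>i<2^N. \<Sum>l<2^N. (cnj (y p) * cnj (vs p $ i)) * blm c $$ (i,l) * (y q * vs q $ l))"
    by (rule G4)
  also have "\<dots> = (\<Sum>p<2. \<Sum>q<2. cnj (y p) * y q * (\<Sum>i<2^N. \<Sum>l<2^N. cnj (vs p $ i) * blm c $$ (i,l) * vs q $ l))"
    by (simp only: pull2')
  also have "\<dots> = (\<Sum>p<2. \<Sum>q<2. cnj (y p) * y q * c p q)"
    by (intro sum.cong refl) (simp add: blm_coeff)
  finally show ?thesis .
qed

end

locale dens = onb +
  fixes \<rho> :: "complex mat"
  assumes dm: "density_matrix N \<rho>"
    and supp: "\<forall>x \<in> carrier_vec (2^N). \<exists>a b. \<rho> *\<^sub>v x = a \<cdot>\<^sub>v v0 + b \<cdot>\<^sub>v v1"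
begin

lemma rc: "\<rho> \<in> carrier_mat (2^N) (2^N)" using dm unfolding density_matrix_def by blast
lemma herm: "i < 2^N \<Longrightarrow> j < 2^N \<Longrightarrow> \<rho> $$ (j,i) = cnj (\<rho> $$ (i,j))" using dm unfolding density_matrix_def by blast
lemma psd: "v \<in> carrier_vec (2^N) \<Longrightarrow> Re ((\<rho> *\<^sub>v v) \<bullet>c v) \<ge> 0" using dm unfolding density_matrix_def by blast
lemma tr1: "mtrace \<rho> = 1" using dm unfolding density_matrix_def by blast

lemma rho_blm_ex: "\<exists>g. \<rho> = blm g"
proof -
  have "\<forall>l. \<exists>a b. l < 2^N \<longrightarrow> \<rho> *\<^sub>v unit_vec (2^N) l = a \<cdot>\<^sub>v v0 + b \<cdot>\<^sub>v v1"
    using supp unit_vec_carrier by blast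
  then obtain A B where AB: "\<forall>l. l < 2^N \<longrightarrow> \<rho> *\<^sub>v unit_vec (2^N) l = A l \<cdot>\<^sub>v v0 + B l \<cdot>\<^sub>v v1"
    by metis
  define \<beta> where "\<beta> = (\<lambda>(p::nat) l. if p = 0 then A l else B l)"
  have col: "\<rho> $$ (i,l) = (\<Sum>p<2. \<beta> p l * vs p $ i)" if "i < 2^N" "l < 2^N" for i l
  proof -
    have "\<rho> $$ (i,l) = (\<rho> *\<^sub>v unit_vec (2^N) l) $ i" using mv_unit[OF rc that] by simp
    also have "\<dots> = A l * v0 $ i + B l * v1 $ i" using AB that v0 v1 by simp
    finally show ?thesis by (simp add: sum2 \<beta>_def vs_def)
  qed
  have b1: "\<beta> p l = (\<Sum>k<2^N. cnj (vs p $ k) * \<rho> $$ (k,l))" if "p < 2" "l < 2^N" for p l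
  proof -
    have "(\<Sum>k<2^N. cnj (vs p $ k) * \<rho> $$ (k,l)) = (\<Sum>k<2^N. cnj (vs p $ k) * (\<Sum>p'<2. \<beta> p' l * vs p' $ k))"
      using that by (intro sum.cong refl) (simp add: col)
    also have "\<dots> = (\<Sum>p'<2. \<beta> p' l * (\<Sum>k<2^N. cnj (vs p $ k) * vs p' $ k))" by (rule lin_s)
    also have "\<dots> = \<beta> p l" using that by (auto simp: sum2 ip' less_2_cases_iff)
    finally show ?thesis by simp
  qed
  have row: "\<rho> $$ (k,l) = (\<Sum>q<2. cnj (vs q $ l) * cnj (\<beta> q k))" if "k < 2^N" "l < 2^N" for k l
  proof -
    have "\<rho> $$ (k,l) = cnj (\<rho> $$ (l,k))" using herm[OF that(2,1)] by simp
    also have "\<dots> = (\<Sum>q<2. cnj (vs q $ l) * cnj (\<beta> q k))" using col[OF that(2,1)] by (simp add: mult.commute)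
    finally show ?thesis .
  qed
  define \<gamma> where "\<gamma> = (\<lambda>p q. \<Sum>k<2^N. cnj (vs p $ k) * cnj (\<beta> q k))"
  have b2: "\<beta> p l = (\<Sum>q<2. cnj (vs q $ l) * \<gamma> p q)" if "p < 2" "l < 2^N" for p l
  proof -
    have "\<beta> p l = (\<Sum>k<2^N. cnj (vs p $ k) * (\<Sum>q<2. cnj (vs q $ l) * cnj (\<beta> q k)))"
      using b1[OF that] that by (simp add: row)
    also have "\<dots> = (\<Sum>q<2. cnj (vs q $ l) * \<gamma> p q)" unfolding \<gamma>_def by (rule lin_s)
    finally show ?thesis .
  qed
  have "\<rho> = blm \<gamma>"
  proof (rule eq_matI)
    fix i l assume "i < dim_row (blm \<gamma>)" "l < dim_col (blm \<gamma>)"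
    then have il: "i < 2^N" "l < 2^N" by (simp_all add: blm_def)
    have "\<rho> $$ (i,l) = (\<Sum>p<2. (\<Sum>q<2. cnj (vs q $ l) * \<gamma> p q) * vs p $ i)"
      using il by (auto simp: col b2 intro!: sum.cong)
    also have "\<dots> = blm \<gamma> $$ (i,l)" using il by (simp add: blm_index sum_distrib_right sum_distrib_left mult_ac)
    finally show "\<rho> $$ (i,l) = blm \<gamma> $$ (i,l)" .
  qed (use rc in \<open>simp_all add: blm_def\<close>)
  then show ?thesis by blast
qed

definition C :: "nat \<Rightarrow> nat \<Rightarrow> complex" where
  "C p q = (\<Sum>i<2^N. \<Sum>l<2^N. cnj (vs p $ i) * \<rho> $$ (i,l) * vs q $ l)"

lemma rho_C: "\<rho> = blm C"
proof -
  obtain g where g: "\<rho> = blm g" using rho_blm_ex by blast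
  have "C p q = g p q" if "p < 2" "q < 2" for p q
  proof -
    have "C p q = (\<Sum>i<2^N. \<Sum>l<2^N. cnj (vs p $ i) * blm g $$ (i,l) * vs q $ l)"
      unfolding C_def by (simp only: g)
    also have "\<dots> = g p q" by (rule blm_coeff[OF that])
    finally show ?thesis .
  qed
  then have "blm g = blm C" by (intro blm_cong) simp
  with g show ?thesis by (rule trans)
qed

lemma C_herm: "cnj (C p q) = C q p"
proof -
  have "cnj (C p q) = (\<Sum>i<2^N. \<Sum>l<2^N. vs p $ i * \<rho> $$ (l,i) * cnj (vs q $ l))"
    unfolding C_def cnj_sum
  proof (intro sum.cong refl)
    fix i l assume "i \<in> {..<(2::nat)^N}" "l \<in> {..<(2::nat)^N}"
    then have "\<rho> $$ (l,i) = cnj (\<rho> $$ (i,l))" using herm[of i l] by simp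
    then show "cnj (cnj (vs p $ i) * \<rho> $$ (i, l) * vs q $ l) = vs p $ i * \<rho> $$ (l, i) * cnj (vs q $ l)"
      by simp
  qed
  also have "\<dots> = (\<Sum>l<2^N. \<Sum>i<2^N. vs p $ i * \<rho> $$ (l,i) * cnj (vs q $ l))" by (rule sum.swap)
  also have "\<dots> = C q p" unfolding C_def by (simp add: mult_ac)
  finally show ?thesis .
qed

lemma C_tr: "C 0 0 + C 1 1 = 1"
proof -
  have "mtrace (blm C) = 1" using trans[OF sym[OF arg_cong[OF rho_C, of mtrace]] tr1] .
  then show ?thesis unfolding blm_trace .
qed

definition r1 where "r1 = 2 * Re (C 1 0)"
definition r2 where "r2 = 2 * Im (C 1 0)"
definition r3 where "r3 = Re (C 0 0 - C 1 1)"

lemma C_bm: "p < 2 \<Longrightarrow> q < 2 \<Longrightarrow> C p q = bm r1 r2 r3 p q"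
  unfolding r1_def r2_def r3_def by (rule herm2[where c=C, OF _ C_tr]) (simp_all add: C_herm)

lemma rho_bm: "\<rho> = blm (bm r1 r2 r3)"
  by (rule trans[OF rho_C blm_cong]) (simp add: C_bm)

lemma tr_sq: "Re (mtrace (\<rho> * \<rho>)) = (1 + r1^2 + r2^2 + r3^2) / 2"
proof -
  have "Re (mtrace (blm (bm r1 r2 r3) * blm (bm r1 r2 r3))) = (1 + r1^2 + r2^2 + r3^2) / 2"
    unfolding blm_sq_trace bm_tr2 by (simp add: power2_eq_square)
  then show ?thesis unfolding rho_bm[symmetric] .
qed

lemma r_le1: "r1^2 + r2^2 + r3^2 \<le> 1"
proof (cases "r1^2 + r2^2 + r3^2 = 0")
  case True then show ?thesis by simp
next
  case False
  define R where "R = sqrt (r1^2 + r2^2 + r3^2)"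
  have nn: "0 \<le> r1^2 + r2^2 + r3^2" by simp
  have pos: "0 < r1^2 + r2^2 + r3^2" using nn False by linarith
  have R: "R > 0" "R^2 = r1^2 + r2^2 + r3^2" using pos unfolding R_def by simp_all
  have "(-r1/R)^2 + (-r2/R)^2 + (-r3/R)^2 = 1" using R pos by (simp add: power_divide add_divide_distrib[symmetric])
  then obtain y where y: "\<forall>p<2. \<forall>q<2. y p * cnj (y q) = bm (-r1/R) (-r2/R) (-r3/R) p q"
    using state_exists by blast
  define x where "x = y 0 \<cdot>\<^sub>v v0 + y 1 \<cdot>\<^sub>v v1"
  have xc: "x \<in> carrier_vec (2^N)" using v0 v1 by (simp add: x_def)
  have "(\<rho> *\<^sub>v x) \<bullet>c x = (\<Sum>p<2. \<Sum>q<2. cnj (y p) * y q * bm r1 r2 r3 p q)"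
    using quad[OF x_def, of "bm r1 r2 r3"] unfolding rho_bm[symmetric] .
  also have "\<dots> = (\<Sum>p<2. \<Sum>q<2. bm r1 r2 r3 p q * bm (-r1/R) (-r2/R) (-r3/R) q p)"
    using y by (intro sum.cong refl) (auto simp: mult.commute)
  also have "\<dots> = complex_of_real ((1 + r1*(-r1/R) + r2*(-r2/R) + r3*(-r3/R))/2)" by (rule bm_tr2)
  finally have eqz: "(\<rho> *\<^sub>v x) \<bullet>c x = complex_of_real ((1 + r1*(-r1/R) + r2*(-r2/R) + r3*(-r3/R))/2)" .
  have "Re ((\<rho> *\<^sub>v x) \<bullet>c x) = (1 + r1*(-r1/R) + r2*(-r2/R) + r3*(-r3/R))/2"
    unfolding eqz Re_complex_of_real ..
  also have "\<dots> = (1 - R)/2"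
  proof -
    have a: "r1*(-r1/R) + r2*(-r2/R) + r3*(-r3/R) = - (r1^2+r2^2+r3^2)/R"
      by (simp add: power2_eq_square add_divide_distrib diff_divide_distrib)
    have b: "- (r1^2+r2^2+r3^2)/R = - R" unfolding R(2)[symmetric] using R(1) by (simp add: power2_eq_square)
    define t where "t = r1*(-r1/R) + r2*(-r2/R) + r3*(-r3/R)"
    have c: "t = -R" unfolding t_def using trans[OF a b] .
    have e: "1 + r1*(-r1/R) + r2*(-r2/R) + r3*(-r3/R) = 1 + t" unfolding t_def by (simp only: add.assoc)
    have "(1 + r1*(-r1/R) + r2*(-r2/R) + r3*(-r3/R))/2 = (1 + t)/2" using e by (rule arg_cong)
    also have "\<dots> = (1 - R)/2" using c by simp
    finally show ?thesis .
  qed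
  finally have "0 \<le> (1 - R)/2" using psd[OF xc] by simp
  then have R1: "R \<le> 1" by simp
  have "R^2 \<le> 1" by (rule power_le_one) (use R(1) R1 in auto)
  then show ?thesis unfolding R(2) .
qed

end

lemma bilin1: fixes a b :: "_ \<Rightarrow> 'c::comm_semiring_0"
  shows "(\<Sum>l\<in>L. (\<Sum>p\<in>P. a p * u p l) * (\<Sum>q\<in>Q. b q * w q l)) = (\<Sum>p\<in>P. \<Sum>q\<in>Q. a p * b q * (\<Sum>l\<in>L. u p l * w q l))"
proof -
  have "(\<Sum>l\<in>L. (\<Sum>p\<in>P. a p * u p l) * (\<Sum>q\<in>Q. b q * w q l)) = (\<Sum>l\<in>L. \<Sum>p\<in>P. \<Sum>q\<in>Q. (a p * u p l) * (b q * w q l))"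
    by (simp only: sum_product)
  also have "\<dots> = (\<Sum>p\<in>P. \<Sum>l\<in>L. \<Sum>q\<in>Q. (a p * u p l) * (b q * w q l))" by (rule sum.swap)
  also have "\<dots> = (\<Sum>p\<in>P. \<Sum>q\<in>Q. \<Sum>l\<in>L. (a p * u p l) * (b q * w q l))" by (rule sum.cong[OF refl], rule sum.swap)
  also have "\<dots> = (\<Sum>p\<in>P. \<Sum>q\<in>Q. a p * b q * (\<Sum>l\<in>L. u p l * w q l))" by (simp add: sum_distrib_left mult_ac)
  finally show ?thesis .
qed

context onb begin

lemma unit_coef: assumes Pc: "\<Psi> \<in> carrier_vec (2^N)" and sp: "\<And>l. l < 2^N \<Longrightarrow> \<Psi> $ l = (\<Sum>p<2. y p * vs p $ l)"
  and u: "\<Psi> \<bullet>c \<Psi> = 1"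
  shows "y 0 * cnj (y 0) + y 1 * cnj (y 1) = 1"
proof -
  have "1 = (\<Sum>l<2^N. \<Psi> $ l * cnj (\<Psi> $ l))" using u cdot_sum[OF Pc] by simp
  also have "\<dots> = (\<Sum>l<2^N. (\<Sum>p<2. y p * vs p $ l) * (\<Sum>q<2. cnj (y q) * cnj (vs q $ l)))"
    by (intro sum.cong refl) (simp add: sp)
  also have "\<dots> = (\<Sum>p<2. \<Sum>q<2. y p * cnj (y q) * (\<Sum>l<2^N. vs p $ l * cnj (vs q $ l)))" by (rule bilin1)
  also have "\<dots> = y 0 * cnj (y 0) + y 1 * cnj (y 1)" by (simp add: sum2 ip)
  finally show ?thesis by simp
qed

lemma ketbra_blm: assumes Pc: "\<Psi> \<in> carrier_vec (2^N)" and sp: "\<And>l. l < 2^N \<Longrightarrow> \<Psi> $ l = (\<Sum>p<2. y p * vs p $ l)"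
  shows "ketbra \<Psi> \<Psi> = blm (\<lambda>p q. y p * cnj (y q))"
proof (rule eq_matI)
  fix i j assume "i < dim_row (blm (\<lambda>p q. y p * cnj (y q)))" "j < dim_col (blm (\<lambda>p q. y p * cnj (y q)))"
  then have ij: "i < 2^N" "j < 2^N" by (simp_all add: blm_def)
  have "ketbra \<Psi> \<Psi> $$ (i,j) = (\<Sum>p<2. y p * vs p $ i) * (\<Sum>q<2. cnj (y q) * cnj (vs q $ j))"
    using ij Pc by (simp add: ketbra_index sp)
  also have "\<dots> = blm (\<lambda>p q. y p * cnj (y q)) $$ (i,j)"
    using ij by (simp add: blm_index sum_product mult_ac)
  finally show "ketbra \<Psi> \<Psi> $$ (i,j) = blm (\<lambda>p q. y p * cnj (y q)) $$ (i,j)" .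
qed (use Pc in \<open>simp_all add: blm_def\<close>)

lemma mixture: assumes sp: "\<And>k l. k < m \<Longrightarrow> l < 2^N \<Longrightarrow> \<Psi> k $ l = (\<Sum>p<2. Y k p * vs p $ l)"
  shows "mat (2^N) (2^N) (\<lambda>(i,j). \<Sum>k<m. complex_of_real (\<mu> k) * (\<Psi> k $ i) * cnj (\<Psi> k $ j))
     = blm (\<lambda>p q. \<Sum>k<m. complex_of_real (\<mu> k) * (Y k p * cnj (Y k q)))"
proof (rule eq_matI)
  fix i j assume "i < dim_row (blm (\<lambda>p q. \<Sum>k<m. complex_of_real (\<mu> k) * (Y k p * cnj (Y k q))))"
    "j < dim_col (blm (\<lambda>p q. \<Sum>k<m. complex_of_real (\<mu> k) * (Y k p * cnj (Y k q))))"
  then have ij: "i < 2^N" "j < 2^N" by (simp_all add: blm_def)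
  have "mat (2^N) (2^N) (\<lambda>(i,j). \<Sum>k<m. complex_of_real (\<mu> k) * (\<Psi> k $ i) * cnj (\<Psi> k $ j)) $$ (i,j)
      = (\<Sum>k<m. complex_of_real (\<mu> k) * ((\<Sum>p<2. Y k p * vs p $ i) * (\<Sum>q<2. cnj (Y k q) * cnj (vs q $ j))))"
    using ij by (auto simp: sp mult.assoc intro!: sum.cong)
  also have "\<dots> = (\<Sum>k<m. \<Sum>p<2. \<Sum>q<2. complex_of_real (\<mu> k) * (Y k p * cnj (Y k q)) * (vs p $ i * cnj (vs q $ j)))"
    unfolding sum_product by (simp only: sum_distrib_left mult_ac)
  also have "\<dots> = (\<Sum>p<2. \<Sum>q<2. \<Sum>k<m. complex_of_real (\<mu> k) * (Y k p * cnj (Y k q)) * (vs p $ i * cnj (vs q $ j)))"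
  proof -
    have "(\<Sum>k<m. \<Sum>p<2. \<Sum>q<2. complex_of_real (\<mu> k) * (Y k p * cnj (Y k q)) * (vs p $ i * cnj (vs q $ j)))
        = (\<Sum>p<2. \<Sum>k<m. \<Sum>q<2. complex_of_real (\<mu> k) * (Y k p * cnj (Y k q)) * (vs p $ i * cnj (vs q $ j)))"
      by (rule sum.swap)
    also have "\<dots> = (\<Sum>p<2. \<Sum>q<2. \<Sum>k<m. complex_of_real (\<mu> k) * (Y k p * cnj (Y k q)) * (vs p $ i * cnj (vs q $ j)))"
      by (rule sum.cong[OF refl], rule sum.swap)
    finally show ?thesis .
  qed
  also have "\<dots> = blm (\<lambda>p q. \<Sum>k<m. complex_of_real (\<mu> k) * (Y k p * cnj (Y k q))) $$ (i,j)"
    using ij by (simp add: blm_index sum_distrib_right mult.assoc)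
  finally show "mat (2^N) (2^N) (\<lambda>(i,j). \<Sum>k<m. complex_of_real (\<mu> k) * (\<Psi> k $ i) * cnj (\<Psi> k $ j)) $$ (i,j)
      = blm (\<lambda>p q. \<Sum>k<m. complex_of_real (\<mu> k) * (Y k p * cnj (Y k q))) $$ (i,j)" .
qed (simp_all add: blm_def)

end

context dens begin

lemma rho_entry: "i < 2^N \<Longrightarrow> l < 2^N \<Longrightarrow> \<rho> $$ (i,l) = (\<Sum>p<2. \<Sum>q<2. C p q * vs p $ i * cnj (vs q $ l))"
  using arg_cong[OF rho_C, of "\<lambda>X. X $$ (i,l)"] by (simp add: blm_index)

lemma in_span:
  fixes m k0 :: nat and \<mu> :: "nat \<Rightarrow> real"
  assumes dec: "\<rho> = mat (2^N) (2^N) (\<lambda>(i,j). \<Sum>k<m. complex_of_real (\<mu> k) * (\<Psi> k $ i) * cnj (\<Psi> k $ j))"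
    and pos: "\<forall>k<m. \<mu> k > 0 \<and> \<Psi> k \<in> carrier_vec (2^N)" and k0: "k0 < m" and l: "l < 2^N"
  shows "\<Psi> k0 $ l = (\<Sum>p<2. (\<Sum>i<2^N. cnj (vs p $ i) * \<Psi> k0 $ i) * vs p $ l)"
proof -
  define yy where "yy p = (\<Sum>i<2^N. cnj (vs p $ i) * \<Psi> k0 $ i)" for p
  define z where "z l = \<Psi> k0 $ l - (\<Sum>p<2. yy p * vs p $ l)" for l
  have orth: "(\<Sum>l<2^N. cnj (vs q $ l) * z l) = 0" if q: "q < 2" for q
  proof -
    have "(\<Sum>l<2^N. cnj (vs q $ l) * z l) = yy q - (\<Sum>l<2^N. cnj (vs q $ l) * (\<Sum>p<2. yy p * vs p $ l))"
      unfolding z_def yy_def by (simp add: right_diff_distrib sum_subtractf)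
    also have "(\<Sum>l<2^N. cnj (vs q $ l) * (\<Sum>p<2. yy p * vs p $ l)) = (\<Sum>p<2. yy p * (\<Sum>l<2^N. cnj (vs q $ l) * vs p $ l))"
      by (rule lin_s)
    also have "\<dots> = yy q" using q by (auto simp: sum2 ip' less_2_cases_iff)
    finally show ?thesis by simp
  qed
  have form0: "(\<Sum>i<2^N. \<Sum>l<2^N. cnj (z i) * \<rho> $$ (i,l) * z l) = 0"
  proof -
    have "(\<Sum>i<2^N. \<Sum>l<2^N. cnj (z i) * \<rho> $$ (i,l) * z l)
        = (\<Sum>i<2^N. \<Sum>l<2^N. cnj (z i) * (\<Sum>p<2. \<Sum>q<2. C p q * vs p $ i * cnj (vs q $ l)) * z l)"
      by (intro sum.cong refl) (simp add: rho_entry)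
    also have "\<dots> = (\<Sum>p<2. \<Sum>q<2. \<Sum>i<2^N. \<Sum>l<2^N. cnj (z i) * (C p q * vs p $ i * cnj (vs q $ l)) * z l)"
      by (rule lin2)
    also have "\<dots> = (\<Sum>p<2. \<Sum>q<2. C p q * (\<Sum>i<2^N. cnj (z i) * vs p $ i) * (\<Sum>l<2^N. cnj (vs q $ l) * z l))"
      by (simp only: pull2)
    also have "\<dots> = 0" by (simp add: orth)
    finally show ?thesis .
  qed
  define w where "w k = (\<Sum>l<2^N. cnj (\<Psi> k $ l) * z l)" for k
  have form1: "(\<Sum>i<2^N. \<Sum>l<2^N. cnj (z i) * \<rho> $$ (i,l) * z l) = (\<Sum>k<m. complex_of_real (\<mu> k) * (cnj (w k) * w k))"
  proof -
    have ent: "\<rho> $$ (i,l) = (\<Sum>k<m. complex_of_real (\<mu> k) * (\<Psi> k $ i) * cnj (\<Psi> k $ l))" if "i < 2^N" "l < 2^N" for i l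
      using arg_cong[OF dec, of "\<lambda>X. X $$ (i,l)"] that by simp
    have "(\<Sum>i<2^N. \<Sum>l<2^N. cnj (z i) * \<rho> $$ (i,l) * z l)
        = (\<Sum>i<2^N. \<Sum>l<2^N. cnj (z i) * (\<Sum>k<m. complex_of_real (\<mu> k) * (\<Psi> k $ i) * cnj (\<Psi> k $ l)) * z l)"
      by (intro sum.cong refl) (simp add: ent)
    also have "\<dots> = (\<Sum>k<m. \<Sum>i<2^N. \<Sum>l<2^N. cnj (z i) * (complex_of_real (\<mu> k) * (\<Psi> k $ i) * cnj (\<Psi> k $ l)) * z l)"
      by (rule lin1)
    also have "\<dots> = (\<Sum>k<m. complex_of_real (\<mu> k) * (\<Sum>i<2^N. cnj (z i) * \<Psi> k $ i) * (\<Sum>l<2^N. cnj (\<Psi> k $ l) * z l))"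
      by (simp only: pull2)
    also have "\<dots> = (\<Sum>k<m. complex_of_real (\<mu> k) * (cnj (w k) * w k))"
      unfolding w_def by (simp add: mult.commute mult.left_commute)
    finally show ?thesis .
  qed
  have "(\<Sum>k<m. complex_of_real (\<mu> k * (cmod (w k))^2)) = 0"
  proof -
    have "(\<Sum>k<m. complex_of_real (\<mu> k * (cmod (w k))^2)) = (\<Sum>k<m. complex_of_real (\<mu> k) * (cnj (w k) * w k))"
      by (intro sum.cong refl) (simp only: of_real_mult complex_norm_square, simp add: ac_simps)
    then show ?thesis using form0 form1 by simp
  qed
  then have s0: "(\<Sum>k<m. \<mu> k * (cmod (w k))^2) = 0"
    by (simp only: of_real_sum[symmetric] of_real_eq_0_iff)
  have nn: "\<And>k. k \<in> {..<m} \<Longrightarrow> 0 \<le> \<mu> k * (cmod (w k))^2" using pos by (auto intro: mult_nonneg_nonneg less_imp_le)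
  have "\<forall>k\<in>{..<m}. \<mu> k * (cmod (w k))^2 = 0"
    using sum_nonneg_eq_0_iff[of "{..<m}" "\<lambda>k. \<mu> k * (cmod (w k))^2"] nn s0 by simp
  then have "\<mu> k0 * (cmod (w k0))^2 = 0" using k0 by simp
  then have wk0: "w k0 = 0" using pos k0 by force
  have "w k0 = (\<Sum>l<2^N. cnj (z l) * z l)"
  proof -
    have "w k0 = (\<Sum>l<2^N. (cnj (z l) + (\<Sum>p<2. cnj (yy p) * cnj (vs p $ l))) * z l)"
      unfolding w_def z_def by (intro sum.cong refl) simp
    also have "\<dots> = (\<Sum>l<2^N. cnj (z l) * z l) + (\<Sum>l<2^N. (\<Sum>p<2. cnj (yy p) * cnj (vs p $ l)) * z l)"
      by (simp add: distrib_right sum.distrib)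
    also have "(\<Sum>l<2^N. (\<Sum>p<2. cnj (yy p) * cnj (vs p $ l)) * z l) = (\<Sum>p<2. cnj (yy p) * (\<Sum>l<2^N. cnj (vs p $ l) * z l))"
    proof -
      have "(\<Sum>l<2^N. (\<Sum>p<2. cnj (yy p) * cnj (vs p $ l)) * z l) = (\<Sum>l<2^N. z l * (\<Sum>p<2. cnj (yy p) * cnj (vs p $ l)))"
        by (simp add: mult.commute)
      also have "\<dots> = (\<Sum>p<2. cnj (yy p) * (\<Sum>l<2^N. z l * cnj (vs p $ l)))" by (rule lin_s)
      also have "\<dots> = (\<Sum>p<2. cnj (yy p) * (\<Sum>l<2^N. cnj (vs p $ l) * z l))" by (simp add: mult.commute)
      finally show ?thesis .
    qed
    also have "\<dots> = 0" by (simp add: orth)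
    finally show ?thesis by simp
  qed
  moreover have "(\<Sum>l<2^N. complex_of_real ((cmod (z l))^2)) = (\<Sum>l<2^N. cnj (z l) * z l)"
    by (intro sum.cong refl) (subst complex_norm_square, rule mult.commute)
  ultimately have "(\<Sum>l<2^N. complex_of_real ((cmod (z l))^2)) = 0" using wk0 by simp
  then have "(\<Sum>l<2^N. (cmod (z l))^2) = 0" by (simp only: of_real_sum[symmetric] of_real_eq_0_iff)
  then have "(cmod (z l))^2 = 0" using sum_nonneg_eq_0_iff[of "{..<2^N}" "\<lambda>l. (cmod (z l))^2"] l by simp
  then have "z l = 0" by simp
  then show ?thesis unfolding z_def yy_def by simp
qed

end

lemma sphere3_compact: "compact {z::real\<times>real\<times>real. (fst z)^2 + (fst (snd z))^2 + (snd (snd z))^2 = 1}"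
proof -
  let ?S = "{z::real\<times>real\<times>real. (fst z)^2 + (fst (snd z))^2 + (snd (snd z))^2 = 1}"
  have c: "compact ({-1..1::real} \<times> ({-1..1::real} \<times> {-1..1::real}))"
    by (intro compact_Times) (rule compact_Icc)+
  have cl: "closed ?S"
    by (rule closed_Collect_eq) (intro continuous_intros)+
  have sub: "?S \<subseteq> {-1..1} \<times> ({-1..1} \<times> {-1..1::real})"
  proof
    fix z :: "real\<times>real\<times>real" assume "z \<in> ?S"
    then have e: "(fst z)^2 + (fst (snd z))^2 + (snd (snd z))^2 = 1" by simp
    have "(fst z)^2 \<le> 1" "(fst (snd z))^2 \<le> 1" "(snd (snd z))^2 \<le> 1"
      using e zero_le_power2[of "fst z"] zero_le_power2[of "fst (snd z)"] zero_le_power2[of "snd (snd z)"] by linarith+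
    then have "\<bar>fst z\<bar> \<le> 1" "\<bar>fst (snd z)\<bar> \<le> 1" "\<bar>snd (snd z)\<bar> \<le> 1" by (simp_all add: abs_square_le_1)
    then show "z \<in> {-1..1} \<times> ({-1..1} \<times> {-1..1::real})" by (cases z) auto
  qed
  have "?S = ({-1..1} \<times> ({-1..1} \<times> {-1..1::real})) \<inter> ?S" using sub by blast
  then show ?thesis using compact_Int_closed[OF c cl] by simp
qed

definition LL :: "(nat \<Rightarrow> 'j \<Rightarrow> real) \<Rightarrow> real \<Rightarrow> real \<Rightarrow> real \<Rightarrow> 'j \<Rightarrow> real" where
  "LL t x1 x2 x3 j = x1 * t 1 j + x2 * t 2 j + x3 * t 3 j"

definition qq :: "'j set \<Rightarrow> (nat \<Rightarrow> 'j \<Rightarrow> real) \<Rightarrow> real \<Rightarrow> real \<Rightarrow> real \<Rightarrow> real" where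
  "qq J t x1 x2 x3 = (\<Sum>j\<in>J. (LL t x1 x2 x3 j)^2)"

definition BB :: "'j set \<Rightarrow> (nat \<Rightarrow> 'j \<Rightarrow> real) \<Rightarrow> real \<Rightarrow> real \<Rightarrow> real \<Rightarrow> real \<Rightarrow> real \<Rightarrow> real \<Rightarrow> real" where
  "BB J t a1 a2 a3 y1 y2 y3 = (\<Sum>j\<in>J. LL t a1 a2 a3 j * LL t y1 y2 y3 j)"

definition WW :: "'j set \<Rightarrow> (nat \<Rightarrow> 'j \<Rightarrow> real) \<Rightarrow> real mat" where
  "WW J t = mat 3 3 (\<lambda>(i,l). \<Sum>j\<in>J. t (i+1) j * t (l+1) j)"

lemma qq_hom: "qq J t (s*x1) (s*x2) (s*x3) = s^2 * qq J t x1 x2 x3"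
  unfolding qq_def LL_def by (simp add: sum_distrib_left power2_eq_square algebra_simps)

lemma qq_expand: "qq J t (a1 + s*y1) (a2 + s*y2) (a3 + s*y3) = qq J t a1 a2 a3 + 2*s*BB J t a1 a2 a3 y1 y2 y3 + s^2 * qq J t y1 y2 y3"
proof -
  have "LL t (a1 + s*y1) (a2 + s*y2) (a3 + s*y3) j = LL t a1 a2 a3 j + s * LL t y1 y2 y3 j" for j
    unfolding LL_def by (simp add: algebra_simps)
  then have "qq J t (a1 + s*y1) (a2 + s*y2) (a3 + s*y3) = (\<Sum>j\<in>J. (LL t a1 a2 a3 j)^2 + 2*s*(LL t a1 a2 a3 j * LL t y1 y2 y3 j) + s^2 * (LL t y1 y2 y3 j)^2)"
    unfolding qq_def by (intro sum.cong refl) (simp add: power2_eq_square algebra_simps)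
  also have "\<dots> = qq J t a1 a2 a3 + 2*s*BB J t a1 a2 a3 y1 y2 y3 + s^2 * qq J t y1 y2 y3"
    unfolding qq_def BB_def by (simp add: sum.distrib sum_distrib_left)
  finally show ?thesis .
qed

lemma qq_nonneg: "qq J t x1 x2 x3 \<ge> 0" unfolding qq_def by (simp add: sum_nonneg)

lemma min_exists: "\<exists>a1 a2 a3. a1^2+a2^2+a3^2 = 1 \<and> (\<forall>x1 x2 x3. x1^2+x2^2+x3^2 = 1 \<longrightarrow> qq J t a1 a2 a3 \<le> qq J t x1 x2 x3)"
proof -
  let ?S = "{z::real\<times>real\<times>real. (fst z)^2 + (fst (snd z))^2 + (snd (snd z))^2 = 1}"
  let ?f = "\<lambda>z::real\<times>real\<times>real. qq J t (fst z) (fst (snd z)) (snd (snd z))"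
  have "(1,0,0) \<in> ?S" by simp
  then have ne: "?S \<noteq> {}" by blast
  have cont: "continuous_on ?S ?f" unfolding qq_def LL_def by (intro continuous_intros)
  obtain z where z: "z \<in> ?S" "\<forall>y\<in>?S. ?f z \<le> ?f y"
    using continuous_attains_inf[OF sphere3_compact ne cont] by blast
  show ?thesis
  proof (intro exI conjI allI impI)
    show "(fst z)^2 + (fst (snd z))^2 + (snd (snd z))^2 = 1" using z(1) by simp
    fix x1 x2 x3 :: real assume "x1^2+x2^2+x3^2 = 1"
    then have "(x1,x2,x3) \<in> ?S" by simp
    then show "qq J t (fst z) (fst (snd z)) (snd (snd z)) \<le> qq J t x1 x2 x3" using z(2) by fastforce
  qed
qed

lemma quad_zero: fixes D E :: real assumes h: "\<And>s. 2*s*D + s^2*E \<ge> 0" shows "D = 0"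
proof (rule ccontr)
  assume D: "D \<noteq> 0"
  define s where "s = \<bar>D\<bar> / (\<bar>E\<bar> + 1)"
  have s: "s > 0" using D by (simp add: s_def)
  have h1: "2*s*\<bar>D\<bar> \<le> s^2*E"
  proof (cases "D \<ge> 0")
    case True then show ?thesis using h[of "-s"] by simp
  next
    case False then show ?thesis using h[of s] by simp
  qed
  have "2*\<bar>D\<bar> \<le> s*E" using h1 s by (simp add: power2_eq_square mult.assoc)
  also have "\<dots> \<le> s * \<bar>E\<bar>" using s by (intro mult_left_mono) auto
  also have "\<dots> = \<bar>D\<bar> * (\<bar>E\<bar> / (\<bar>E\<bar> + 1))" by (simp add: s_def)
  also have "\<dots> \<le> \<bar>D\<bar> * 1" by (intro mult_left_mono) auto
  finally show False using D by simp
qed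

lemma rayleigh_min:
  assumes a: "a1^2+a2^2+a3^2 = 1" and amin: "\<forall>x1 x2 x3. x1^2+x2^2+x3^2 = 1 \<longrightarrow> qq J t a1 a2 a3 \<le> qq J t x1 x2 x3"
  shows "qq J t x1 x2 x3 \<ge> qq J t a1 a2 a3 * (x1^2+x2^2+x3^2)"
proof (cases "x1^2+x2^2+x3^2 = 0")
  case True
  then have "x1 = 0" "x2 = 0" "x3 = 0" by (simp_all add: sum_power2_eq_zero_iff add_nonneg_eq_0_iff)
  then show ?thesis using True by (simp add: qq_def LL_def)
next
  case False
  define n where "n = sqrt (x1^2+x2^2+x3^2)"
  have nn: "0 \<le> x1^2+x2^2+x3^2" by simp
  have pos: "0 < x1^2+x2^2+x3^2" using nn False by linarith
  have n: "n > 0" "n^2 = x1^2+x2^2+x3^2" using pos unfolding n_def by simp_all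
  have u: "(x1/n)^2 + (x2/n)^2 + (x3/n)^2 = 1" using n pos by (simp add: power_divide add_divide_distrib[symmetric])
  have "qq J t x1 x2 x3 = qq J t (n*(x1/n)) (n*(x2/n)) (n*(x3/n))" using n by simp
  also have "\<dots> = n^2 * qq J t (x1/n) (x2/n) (x3/n)" by (rule qq_hom)
  finally have e: "qq J t x1 x2 x3 = n^2 * qq J t (x1/n) (x2/n) (x3/n)" .
  have "qq J t a1 a2 a3 \<le> qq J t (x1/n) (x2/n) (x3/n)" using amin u by blast
  then have "n^2 * qq J t a1 a2 a3 \<le> n^2 * qq J t (x1/n) (x2/n) (x3/n)" by (simp add: mult_left_mono)
  then show ?thesis unfolding e n(2)[symmetric] by (simp add: mult.commute)
qed

lemma lagrange:
  assumes a: "a1^2+a2^2+a3^2 = 1" and amin: "\<forall>x1 x2 x3. x1^2+x2^2+x3^2 = 1 \<longrightarrow> qq J t a1 a2 a3 \<le> qq J t x1 x2 x3"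
  shows "BB J t a1 a2 a3 y1 y2 y3 = qq J t a1 a2 a3 * (a1*y1 + a2*y2 + a3*y3)"
proof -
  let ?l = "qq J t a1 a2 a3"
  have "2*s*(BB J t a1 a2 a3 y1 y2 y3 - ?l * (a1*y1 + a2*y2 + a3*y3)) + s^2 * (qq J t y1 y2 y3 - ?l * (y1^2+y2^2+y3^2)) \<ge> 0" for s
  proof -
    have "qq J t (a1 + s*y1) (a2 + s*y2) (a3 + s*y3) \<ge> ?l * ((a1 + s*y1)^2 + (a2 + s*y2)^2 + (a3 + s*y3)^2)"
      by (rule rayleigh_min[OF a amin])
    moreover have "(a1 + s*y1)^2 + (a2 + s*y2)^2 + (a3 + s*y3)^2 = 1 + 2*s*(a1*y1 + a2*y2 + a3*y3) + s^2*(y1^2+y2^2+y3^2)"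
      using a by (simp add: power2_eq_square algebra_simps)
    ultimately have "?l * (1 + 2*s*(a1*y1 + a2*y2 + a3*y3) + s^2*(y1^2+y2^2+y3^2)) \<le> qq J t a1 a2 a3 + 2*s*BB J t a1 a2 a3 y1 y2 y3 + s^2 * qq J t y1 y2 y3"
      unfolding qq_expand by simp
    then show ?thesis by (simp add: algebra_simps; linarith)
  qed
  then have "BB J t a1 a2 a3 y1 y2 y3 - ?l * (a1*y1 + a2*y2 + a3*y3) = 0" by (rule quad_zero)
  then show ?thesis by simp
qed

lemma WW_carrier: "WW J t \<in> carrier_mat 3 3" unfolding WW_def by simp

lemma WW_mult: assumes "v \<in> carrier_vec 3" "i < 3"
  shows "(WW J t *\<^sub>v v) $ i = (\<Sum>j\<in>J. t (i+1) j * LL t (v$0) (v$1) (v$2) j)"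
proof -
  have "(WW J t *\<^sub>v v) $ i = (\<Sum>k\<in>{0..<3}. WW J t $$ (i,k) * v $ k)"
    using assms by (simp add: scalar_prod_def WW_def)
  also have "\<dots> = (\<Sum>k\<in>{0..<3}. (\<Sum>j\<in>J. t (i+1) j * t (k+1) j) * v $ k)"
    using assms by (intro sum.cong refl) (simp add: WW_def)
  also have "\<dots> = (\<Sum>j\<in>J. t (i+1) j * LL t (v$0) (v$1) (v$2) j)"
    by (simp add: LL_def eval_nat_numeral atLeast0LessThan lessThan_Suc sum_distrib_left sum_distrib_right sum.distrib algebra_simps)
  finally show ?thesis .
qed

lemma WW_mult3: assumes "v \<in> carrier_vec 3"
  shows "(WW J t *\<^sub>v v) $ 0 = (\<Sum>j\<in>J. t 1 j * LL t (v$0) (v$1) (v$2) j)"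
    "(WW J t *\<^sub>v v) $ 1 = (\<Sum>j\<in>J. t 2 j * LL t (v$0) (v$1) (v$2) j)"
    "(WW J t *\<^sub>v v) $ 2 = (\<Sum>j\<in>J. t 3 j * LL t (v$0) (v$1) (v$2) j)"
  using WW_mult[OF assms, of 0] WW_mult[OF assms, of 1] WW_mult[OF assms, of 2] by (simp_all add: numeral_2_eq_2 numeral_3_eq_3)

lemma vec3_index: "i < 3 \<Longrightarrow> vec 3 (\<lambda>i. if i = 0 then a1 else if i = 1 then a2 else a3) $ i = (if i = 0 then a1 else if i = 1 then (a2::real) else a3)"
  by simp

lemma eig_main: assumes fin: "finite J"
  shows "(\<forall>x1 x2 x3. qq J t x1 x2 x3 \<ge> min_eigenvalue (WW J t) * (x1^2+x2^2+x3^2))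
       \<and> (\<exists>u1 u2 u3. u1^2+u2^2+u3^2 = 1 \<and> qq J t u1 u2 u3 = min_eigenvalue (WW J t))"
proof -
  obtain a1 a2 a3 where a: "a1^2+a2^2+a3^2 = 1" and amin: "\<forall>x1 x2 x3. x1^2+x2^2+x3^2 = 1 \<longrightarrow> qq J t a1 a2 a3 \<le> qq J t x1 x2 x3"
    using min_exists by blast
  let ?l = "qq J t a1 a2 a3"
  define av where "av = vec 3 (\<lambda>i. if i = 0 then a1 else if i = 1 then a2 else a3)"
  have avc: "av \<in> carrier_vec 3" by (simp add: av_def)
  have av0: "av \<noteq> 0\<^sub>v 3"
  proof
    assume "av = 0\<^sub>v 3"
    then have "av $ 0 = 0" "av $ 1 = 0" "av $ 2 = 0" by auto
    then have "a1 = 0" "a2 = 0" "a3 = 0" by (simp_all add: av_def)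
    then show False using a by simp
  qed
  have "WW J t *\<^sub>v av = ?l \<cdot>\<^sub>v av"
  proof (rule eq_vecI)
    fix i assume "i < dim_vec (?l \<cdot>\<^sub>v av)"
    then have i: "i < 3" by (simp add: av_def)
    have e: "av $ 0 = a1" "av $ 1 = a2" "av $ 2 = a3" by (simp_all add: av_def)
    have "(WW J t *\<^sub>v av) $ i = (\<Sum>j\<in>J. t (i+1) j * LL t a1 a2 a3 j)"
      by (simp only: WW_mult[OF avc i] e)
    also have "\<dots> = BB J t a1 a2 a3 (if i = 0 then 1 else 0) (if i = 1 then 1 else 0) (if i = 2 then 1 else 0)"
      unfolding BB_def LL_def using i by (auto intro!: sum.cong simp: less_Suc_eq numeral_3_eq_3 numeral_2_eq_2)
    also have "\<dots> = ?l * (a1 * (if i = 0 then 1 else 0) + a2 * (if i = 1 then 1 else 0) + a3 * (if i = 2 then 1 else 0))"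
      by (rule lagrange[OF a amin])
    also have "\<dots> = (?l \<cdot>\<^sub>v av) $ i" using i by (auto simp: av_def less_Suc_eq numeral_3_eq_3)
    finally show "(WW J t *\<^sub>v av) $ i = (?l \<cdot>\<^sub>v av) $ i" .
  qed (simp add: av_def WW_def)
  then have ev: "eigenvalue (WW J t) ?l"
    unfolding eigenvalue_def eigenvector_def using avc av0 by (auto simp: WW_def)
  have fin_ev: "finite {w. eigenvalue (WW J t) w}"
  proof -
    have c3: "coeff (char_poly (WW J t)) 3 = 1"
      using degree_monic_char_poly[OF WW_carrier[of J t]] by blast
    have "char_poly (WW J t) \<noteq> 0"
    proof
      assume "char_poly (WW J t) = 0"
      then show False using c3 by simp
    qed
    then have "finite {w. poly (char_poly (WW J t)) w = 0}" by (rule poly_roots_finite)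
    then show ?thesis unfolding eigenvalue_root_char_poly[OF WW_carrier[of J t]] .
  qed
  define w where "w = min_eigenvalue (WW J t)"
  have w_le: "w \<le> ?l" unfolding w_def min_eigenvalue_def using fin_ev ev by (simp add: Min_le)
  have w_ev: "eigenvalue (WW J t) w" unfolding w_def min_eigenvalue_def
    using Min_in[OF fin_ev] ev by blast
  have part1: "qq J t x1 x2 x3 \<ge> w * (x1^2+x2^2+x3^2)" for x1 x2 x3
  proof -
    have "w * (x1^2+x2^2+x3^2) \<le> ?l * (x1^2+x2^2+x3^2)" using w_le by (simp add: mult_right_mono)
    also have "\<dots> \<le> qq J t x1 x2 x3" by (rule rayleigh_min[OF a amin])
    finally show ?thesis .
  qed
  obtain v where v: "v \<in> carrier_vec 3" "v \<noteq> 0\<^sub>v 3" "WW J t *\<^sub>v v = w \<cdot>\<^sub>v v"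
    using w_ev unfolding eigenvalue_def eigenvector_def by (auto simp: WW_def)
  define e1 e2 e3 where "e1 = v$0" and "e2 = v$1" and "e3 = v$2"
  have Wv: "(WW J t *\<^sub>v v) $ i = w * v $ i" if "i < 3" for i
    using v(1,3) that by simp
  have "qq J t e1 e2 e3 = e1 * (WW J t *\<^sub>v v) $ 0 + e2 * (WW J t *\<^sub>v v) $ 1 + e3 * (WW J t *\<^sub>v v) $ 2"
    unfolding WW_mult3[OF v(1)] e1_def e2_def e3_def qq_def
    by (simp add: LL_def power2_eq_square sum_distrib_left sum.distrib algebra_simps)
  also have "\<dots> = w * (e1^2+e2^2+e3^2)" by (simp add: Wv e1_def e2_def e3_def power2_eq_square algebra_simps)
  finally have qe: "qq J t e1 e2 e3 = w * (e1^2+e2^2+e3^2)" .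
  have enz: "e1^2+e2^2+e3^2 \<noteq> 0"
  proof
    assume "e1^2+e2^2+e3^2 = 0"
    then have "e1 = 0" "e2 = 0" "e3 = 0" by (simp_all add: sum_power2_eq_zero_iff add_nonneg_eq_0_iff)
    then have "v = 0\<^sub>v 3" using v(1) unfolding e1_def e2_def e3_def
      by (intro eq_vecI) (auto simp: less_Suc_eq numeral_3_eq_3 numeral_2_eq_2)
    then show False using v(2) by simp
  qed
  define n where "n = sqrt (e1^2+e2^2+e3^2)"
  have nn: "0 \<le> e1^2+e2^2+e3^2" by simp
  have pos: "0 < e1^2+e2^2+e3^2" using nn enz by linarith
  have n: "n > 0" "n^2 = e1^2+e2^2+e3^2" using pos unfolding n_def by simp_all
  have u: "(e1/n)^2 + (e2/n)^2 + (e3/n)^2 = 1" using n pos by (simp add: power_divide add_divide_distrib[symmetric])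
  have "qq J t e1 e2 e3 = qq J t (n*(e1/n)) (n*(e2/n)) (n*(e3/n))" using n by simp
  also have "\<dots> = n^2 * qq J t (e1/n) (e2/n) (e3/n)" by (rule qq_hom)
  finally have A: "qq J t e1 e2 e3 = n^2 * qq J t (e1/n) (e2/n) (e3/n)" .
  have B: "qq J t e1 e2 e3 = n^2 * w" unfolding qe n(2)[symmetric] by (simp add: mult.commute)
  have "n^2 * qq J t (e1/n) (e2/n) (e3/n) = n^2 * w" using trans[OF sym[OF A] B] .
  then have "qq J t (e1/n) (e2/n) (e3/n) = w" using n(1) by simp
  with u part1 show ?thesis unfolding w_def by blast
qed


lemma mix_identity:
  assumes mu: "(\<Sum>k<m. \<mu> k) = (1::real)"
    and r1: "(\<Sum>k<m. \<mu> k * n1 k) = r1" and r2: "(\<Sum>k<m. \<mu> k * n2 k) = r2" and r3: "(\<Sum>k<m. \<mu> k * n3 k) = r3"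
  shows "(\<Sum>k<m. \<mu> k * (\<Sum>j\<in>J. ((P j + LL t (n1 k) (n2 k) (n3 k) j)/2)^2))
    = (\<Sum>j\<in>J. ((P j + LL t r1 r2 r3 j)/2)^2) + (1/4) * (\<Sum>k<m. \<mu> k * qq J t (n1 k - r1) (n2 k - r2) (n3 k - r3))"
proof -
  define A where "A j = (P j + LL t r1 r2 r3 j)/2" for j
  define B where "B k j = LL t (n1 k - r1) (n2 k - r2) (n3 k - r3) j" for k j
  have split: "(P j + LL t (n1 k) (n2 k) (n3 k) j)/2 = A j + B k j / 2" for k j
    unfolding A_def B_def LL_def by (simp add: field_simps)
  have zero: "(\<Sum>k<m. \<mu> k * B k j) = 0" for j
  proof -
    have "(\<Sum>k<m. \<mu> k * B k j) = t 1 j * ((\<Sum>k<m. \<mu> k * n1 k) - r1 * (\<Sum>k<m. \<mu> k))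
        + t 2 j * ((\<Sum>k<m. \<mu> k * n2 k) - r2 * (\<Sum>k<m. \<mu> k)) + t 3 j * ((\<Sum>k<m. \<mu> k * n3 k) - r3 * (\<Sum>k<m. \<mu> k))"
      unfolding B_def LL_def by (simp add: sum_distrib_left sum_distrib_right sum.distrib sum_subtractf algebra_simps)
    also have "\<dots> = 0" using mu r1 r2 r3 by simp
    finally show ?thesis .
  qed
  have "(\<Sum>k<m. \<mu> k * (\<Sum>j\<in>J. ((P j + LL t (n1 k) (n2 k) (n3 k) j)/2)^2))
      = (\<Sum>k<m. \<Sum>j\<in>J. \<mu> k * (A j)^2 + A j * (\<mu> k * B k j) + (1/4) * (\<mu> k * (B k j)^2))"
    unfolding split by (simp add: sum_distrib_left power2_eq_square algebra_simps)
  also have "\<dots> = (\<Sum>j\<in>J. \<Sum>k<m. \<mu> k * (A j)^2 + A j * (\<mu> k * B k j) + (1/4) * (\<mu> k * (B k j)^2))"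
    by (rule sum.swap)
  also have "\<dots> = (\<Sum>j\<in>J. (A j)^2 * (\<Sum>k<m. \<mu> k) + A j * (\<Sum>k<m. \<mu> k * B k j) + (1/4) * (\<Sum>k<m. \<mu> k * (B k j)^2))"
    by (simp add: sum.distrib sum_distrib_left sum_distrib_right mult_ac)
  also have "\<dots> = (\<Sum>j\<in>J. (A j)^2) + (1/4) * (\<Sum>j\<in>J. \<Sum>k<m. \<mu> k * (B k j)^2)"
    by (simp add: mu zero sum.distrib sum_distrib_left)
  also have "(\<Sum>j\<in>J. \<Sum>k<m. \<mu> k * (B k j)^2) = (\<Sum>k<m. \<mu> k * qq J t (n1 k - r1) (n2 k - r2) (n3 k - r3))"
    unfolding qq_def B_def by (subst sum.swap) (simp add: sum_distrib_left)
  finally show ?thesis unfolding A_def .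
qed

lemma mix_var:
  assumes mu: "(\<Sum>k<m. \<mu> k) = (1::real)"
    and r1: "(\<Sum>k<m. \<mu> k * n1 k) = r1" and r2: "(\<Sum>k<m. \<mu> k * n2 k) = r2" and r3: "(\<Sum>k<m. \<mu> k * n3 k) = r3"
    and unit: "\<And>k. k < m \<Longrightarrow> (n1 k)^2 + (n2 k)^2 + (n3 k)^2 = 1"
  shows "(\<Sum>k<m. \<mu> k * ((n1 k - r1)^2 + (n2 k - r2)^2 + (n3 k - r3)^2)) = 1 - (r1^2 + r2^2 + r3^2)"
proof -
  have "(\<Sum>k<m. \<mu> k * ((n1 k - r1)^2 + (n2 k - r2)^2 + (n3 k - r3)^2))
     = (\<Sum>k<m. \<mu> k * ((n1 k)^2 + (n2 k)^2 + (n3 k)^2)) - 2 * (r1 * (\<Sum>k<m. \<mu> k * n1 k) + r2 * (\<Sum>k<m. \<mu> k * n2 k) + r3 * (\<Sum>k<m. \<mu> k * n3 k))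
       + (r1^2 + r2^2 + r3^2) * (\<Sum>k<m. \<mu> k)"
    by (simp add: power2_diff sum.distrib sum_subtractf sum_distrib_left sum_distrib_right algebra_simps)
  also have "(\<Sum>k<m. \<mu> k * ((n1 k)^2 + (n2 k)^2 + (n3 k)^2)) = (\<Sum>k<m. \<mu> k)"
    using unit by (intro sum.cong) auto
  finally show ?thesis using mu r1 r2 r3 by (simp add: power2_eq_square)
qed

lemma roots_exist:
  assumes r: "r1^2 + r2^2 + r3^2 < (1::real)" and e: "e1^2 + e2^2 + e3^2 = 1"
  shows "\<exists>s1 s2. s1 > 0 \<and> s2 < 0 \<and> (r1 + s1*e1)^2 + (r2 + s1*e2)^2 + (r3 + s1*e3)^2 = 1
     \<and> (r1 + s2*e1)^2 + (r2 + s2*e2)^2 + (r3 + s2*e3)^2 = 1"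
proof -
  define b where "b = r1*e1 + r2*e2 + r3*e3"
  define D where "D = b^2 + 1 - (r1^2 + r2^2 + r3^2)"
  have Dpos: "D > b^2" using r by (simp add: D_def)
  have D0: "D > 0" using Dpos by (smt (verit) zero_le_power2)
  have sq: "sqrt D > \<bar>b\<bar>" using Dpos by (metis real_sqrt_abs real_sqrt_less_iff)
  have sqD: "(sqrt D)^2 = D" using D0 by simp
  have key: "(r1 + s*e1)^2 + (r2 + s*e2)^2 + (r3 + s*e3)^2 = 1" if "(s + b)^2 = D" for s
  proof -
    have "(r1 + s*e1)^2 + (r2 + s*e2)^2 + (r3 + s*e3)^2 = (r1^2+r2^2+r3^2) + 2*s*b + s^2*(e1^2+e2^2+e3^2)"
      unfolding b_def by (simp add: power2_eq_square algebra_simps)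
    also have "\<dots> = (r1^2+r2^2+r3^2) + 2*s*b + s^2" using e by simp
    also have "\<dots> = 1" using that unfolding D_def by (simp add: power2_eq_square algebra_simps)
    finally show ?thesis .
  qed
  show ?thesis
  proof (intro exI conjI)
    show "-b + sqrt D > 0" using sq by linarith
    show "-b - sqrt D < 0" using sq by linarith
    show "(r1 + (-b + sqrt D)*e1)^2 + (r2 + (-b + sqrt D)*e2)^2 + (r3 + (-b + sqrt D)*e3)^2 = 1"
      by (rule key) (simp add: sqD)
    show "(r1 + (-b - sqrt D)*e1)^2 + (r2 + (-b - sqrt D)*e2)^2 + (r3 + (-b - sqrt D)*e3)^2 = 1"
      by (rule key) (simp add: sqD)
  qed
qed

lemma bm_mix:
  assumes mu: "(\<Sum>k<m. \<mu> k) = (1::real)"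
    and r1: "(\<Sum>k<m. \<mu> k * n1 k) = r1" and r2: "(\<Sum>k<m. \<mu> k * n2 k) = r2" and r3: "(\<Sum>k<m. \<mu> k * n3 k) = r3"
    and pq: "p < 2" "q < 2"
  shows "(\<Sum>k<m. complex_of_real (\<mu> k) * bm (n1 k) (n2 k) (n3 k) p q) = bm r1 r2 r3 p q"
proof -
  have a: "(\<Sum>k<m. \<mu> k * ((1 + n3 k)/2)) = (1 + r3)/2"
    using mu r3 by (simp add: sum_divide_distrib[symmetric] ring_distribs sum.distrib)
  have b: "(\<Sum>k<m. \<mu> k * ((1 - n3 k)/2)) = (1 - r3)/2"
    using mu r3 by (simp add: sum_divide_distrib[symmetric] ring_distribs sum_subtractf)
  have c1: "(\<Sum>k<m. \<mu> k * (n1 k/2)) = r1/2" using r1 by (simp add: sum_divide_distrib[symmetric])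
  have c2: "(\<Sum>k<m. \<mu> k * (n2 k/2)) = r2/2" using r2 by (simp add: sum_divide_distrib[symmetric])
  have c2': "(\<Sum>k<m. \<mu> k * (-(n2 k)/2)) = -r2/2" using r2 by (simp add: sum_divide_distrib[symmetric] sum_negf)
  have z: "(\<Sum>k<m. \<mu> k * 0) = (0::real)" by simp
  show ?thesis using pq a b c1 c2 c2'
    by (auto simp: bm_def complex_eq_iff less_2_cases_iff)
qed

lemma bm_mix_inv:
  assumes mu: "(\<Sum>k<m. \<mu> k) = (1::real)"
    and h: "\<And>p q. p < 2 \<Longrightarrow> q < 2 \<Longrightarrow> bm r1 r2 r3 p q = (\<Sum>k<m. complex_of_real (\<mu> k) * bm (n1 k) (n2 k) (n3 k) p q)"
  shows "(\<Sum>k<m. \<mu> k * n1 k) = r1" "(\<Sum>k<m. \<mu> k * n2 k) = r2" "(\<Sum>k<m. \<mu> k * n3 k) = r3"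
proof -
  have h10: "bm r1 r2 r3 1 0 = (\<Sum>k<m. complex_of_real (\<mu> k) * bm (n1 k) (n2 k) (n3 k) 1 0)" using h by simp
  have h00: "bm r1 r2 r3 0 0 = (\<Sum>k<m. complex_of_real (\<mu> k) * bm (n1 k) (n2 k) (n3 k) 0 0)" using h by simp
  have "r1/2 = (\<Sum>k<m. \<mu> k * (n1 k/2))" using arg_cong[OF h10, of Re] by (simp add: bm_def)
  then show "(\<Sum>k<m. \<mu> k * n1 k) = r1" by (simp add: sum_divide_distrib[symmetric])
  have "r2/2 = (\<Sum>k<m. \<mu> k * (n2 k/2))" using arg_cong[OF h10, of Im] by (simp add: bm_def)
  then show "(\<Sum>k<m. \<mu> k * n2 k) = r2" by (simp add: sum_divide_distrib[symmetric])
  have "(1+r3)/2 = (\<Sum>k<m. \<mu> k * ((1 + n3 k)/2))" using arg_cong[OF h00, of Re] by (simp add: bm_def)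
  also have "\<dots> = (1 + (\<Sum>k<m. \<mu> k * n3 k))/2" using mu
    by (simp add: sum_divide_distrib[symmetric] ring_distribs sum.distrib)
  finally show "(\<Sum>k<m. \<mu> k * n3 k) = r3" by simp
qed

context onb begin

lemma cdot_span: assumes Pc: "\<Psi> \<in> carrier_vec (2^N)" and sp: "\<And>l. l < 2^N \<Longrightarrow> \<Psi> $ l = (\<Sum>p<2. y p * vs p $ l)"
  shows "\<Psi> \<bullet>c \<Psi> = y 0 * cnj (y 0) + y 1 * cnj (y 1)"
proof -
  have "\<Psi> \<bullet>c \<Psi> = (\<Sum>l<2^N. \<Psi> $ l * cnj (\<Psi> $ l))" using cdot_sum[OF Pc] by simp
  also have "\<dots> = (\<Sum>l<2^N. (\<Sum>p<2. y p * vs p $ l) * (\<Sum>q<2. cnj (y q) * cnj (vs q $ l)))"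
    by (intro sum.cong refl) (simp add: sp)
  also have "\<dots> = (\<Sum>p<2. \<Sum>q<2. y p * cnj (y q) * (\<Sum>l<2^N. vs p $ l * cnj (vs q $ l)))" by (rule bilin1)
  also have "\<dots> = y 0 * cnj (y 0) + y 1 * cnj (y 1)" by (simp add: sum2 ip)
  finally show ?thesis .
qed

end

context dens begin

lemma finJ: "finite (JJ N)" by (simp add: finite_PiE)

lemma W_WW: "W_mat N v0 v1 = WW (JJ N) tj" unfolding W_eq WW_def ..

lemma lc_bm: "length_corr N (blm (bm x1 x2 x3)) = (\<Sum>j\<in>JJ N. ((Pj j + LL tj x1 x2 x3 j)/2)^2)"
  unfolding length_corr_bm LL_def by (simp add: add.assoc)

definition VV where "VV = (\<Sum>j\<in>JJ N. ((Pj j + LL tj r1 r2 r3 j)/2)^2) + 1/4 * min_eigenvalue (WW (JJ N) tj) * (1 - (r1^2+r2^2+r3^2))"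

lemma target_eq: "length_corr N \<rho> + 1/2 * (1 - Re (mtrace (\<rho> * \<rho>))) * min_eigenvalue (W_mat N v0 v1) = VV"
proof -
  have "length_corr N (blm (bm r1 r2 r3)) = (\<Sum>j\<in>JJ N. ((Pj j + LL tj r1 r2 r3 j)/2)^2)" by (rule lc_bm)
  then have lc: "length_corr N \<rho> = (\<Sum>j\<in>JJ N. ((Pj j + LL tj r1 r2 r3 j)/2)^2)" unfolding rho_bm[symmetric] .
  show ?thesis unfolding lc tr_sq W_WW VV_def by (simp add: field_simps)
qed

abbreviation wmin where "wmin \<equiv> min_eigenvalue (WW (JJ N) tj)"

lemma common_value:
  fixes m :: nat and \<mu> :: "nat \<Rightarrow> real"
  assumes mu: "(\<Sum>k<m. \<mu> k) = 1"
    and s1: "(\<Sum>k<m. \<mu> k * n1 k) = r1" and s2: "(\<Sum>k<m. \<mu> k * n2 k) = r2" and s3: "(\<Sum>k<m. \<mu> k * n3 k) = r3"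
    and lck: "\<And>k. k < m \<Longrightarrow> length_corr N (ketbra (\<Psi> k) (\<Psi> k)) = (\<Sum>j\<in>JJ N. ((Pj j + LL tj (n1 k) (n2 k) (n3 k) j)/2)^2)"
  shows "(\<Sum>k<m. \<mu> k * length_corr N (ketbra (\<Psi> k) (\<Psi> k)))
     = (\<Sum>j\<in>JJ N. ((Pj j + LL tj r1 r2 r3 j)/2)^2) + (1/4) * (\<Sum>k<m. \<mu> k * qq (JJ N) tj (n1 k - r1) (n2 k - r2) (n3 k - r3))"
proof -
  have "(\<Sum>k<m. \<mu> k * length_corr N (ketbra (\<Psi> k) (\<Psi> k))) = (\<Sum>k<m. \<mu> k * (\<Sum>j\<in>JJ N. ((Pj j + LL tj (n1 k) (n2 k) (n3 k) j)/2)^2))"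
    by (intro sum.cong refl) (simp add: lck)
  also have "\<dots> = (\<Sum>j\<in>JJ N. ((Pj j + LL tj r1 r2 r3 j)/2)^2) + (1/4) * (\<Sum>k<m. \<mu> k * qq (JJ N) tj (n1 k - r1) (n2 k - r2) (n3 k - r3))"
    by (rule mix_identity[OF mu s1 s2 s3])
  finally show ?thesis .
qed

lemma LB:
  fixes m :: nat and \<mu> :: "nat \<Rightarrow> real"
  assumes c: "\<forall>k<m. \<mu> k > 0 \<and> \<Psi> k \<in> carrier_vec (2^N) \<and> \<Psi> k \<bullet>c \<Psi> k = 1"
    and mu: "(\<Sum>k<m. \<mu> k) = 1"
    and dec: "\<rho> = mat (2^N) (2^N) (\<lambda>(i,j). \<Sum>k<m. complex_of_real (\<mu> k) * (\<Psi> k $ i) * cnj (\<Psi> k $ j))"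
  shows "VV \<le> (\<Sum>k<m. \<mu> k * length_corr N (ketbra (\<Psi> k) (\<Psi> k)))"
proof -
  define Y where "Y k p = (\<Sum>i<2^N. cnj (vs p $ i) * \<Psi> k $ i)" for k p
  have pos': "\<forall>k<m. \<mu> k > 0 \<and> \<Psi> k \<in> carrier_vec (2^N)" using c by blast
  have sp: "\<Psi> k $ l = (\<Sum>p<2. Y k p * vs p $ l)" if "k < m" "l < 2^N" for k l
    unfolding Y_def by (rule in_span[OF dec pos' that])
  have u: "Y k 0 * cnj (Y k 0) + Y k 1 * cnj (Y k 1) = 1" if k: "k < m" for k
    by (rule unit_coef[of "\<Psi> k"]) (use c k sp in auto)
  define n1 where "n1 k = 2 * Re (Y k 1 * cnj (Y k 0))" for k
  define n2 where "n2 k = 2 * Im (Y k 1 * cnj (Y k 0))" for k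
  define n3 where "n3 k = Re (Y k 0 * cnj (Y k 0) - Y k 1 * cnj (Y k 1))" for k
  have pb: "(\<forall>p<2. \<forall>q<2. Y k p * cnj (Y k q) = bm (n1 k) (n2 k) (n3 k) p q) \<and> (n1 k)^2 + (n2 k)^2 + (n3 k)^2 = 1"
    if "k < m" for k
    unfolding n1_def n2_def n3_def by (rule pure_bloch[OF u[OF that]])
  have lck: "length_corr N (ketbra (\<Psi> k) (\<Psi> k)) = (\<Sum>j\<in>JJ N. ((Pj j + LL tj (n1 k) (n2 k) (n3 k) j)/2)^2)"
    if k: "k < m" for k
  proof -
    have "ketbra (\<Psi> k) (\<Psi> k) = blm (\<lambda>p q. Y k p * cnj (Y k q))"
      by (rule ketbra_blm) (use c k sp in auto)
    also have "\<dots> = blm (bm (n1 k) (n2 k) (n3 k))" by (rule blm_cong) (use pb[OF k] in auto)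
    finally show ?thesis by (simp add: lc_bm)
  qed
  have mixeq: "blm (bm r1 r2 r3) = blm (\<lambda>p q. \<Sum>k<m. complex_of_real (\<mu> k) * (Y k p * cnj (Y k q)))"
    using trans[OF sym[OF rho_bm] trans[OF dec mixture[of m \<Psi> Y \<mu>]]] sp by blast
  have hmix: "bm r1 r2 r3 p q = (\<Sum>k<m. complex_of_real (\<mu> k) * bm (n1 k) (n2 k) (n3 k) p q)" if "p < 2" "q < 2" for p q
  proof -
    have "bm r1 r2 r3 p q = (\<Sum>k<m. complex_of_real (\<mu> k) * (Y k p * cnj (Y k q)))"
      using blm_eqD[OF mixeq that] by simp
    also have "\<dots> = (\<Sum>k<m. complex_of_real (\<mu> k) * bm (n1 k) (n2 k) (n3 k) p q)"
      using pb that by (intro sum.cong refl) auto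
    finally show ?thesis .
  qed
  have s1: "(\<Sum>k<m. \<mu> k * n1 k) = r1" and s2: "(\<Sum>k<m. \<mu> k * n2 k) = r2" and s3: "(\<Sum>k<m. \<mu> k * n3 k) = r3"
    using bm_mix_inv[OF mu hmix] by blast+
  obtain e1 e2 e3 where eig: "\<forall>x1 x2 x3. qq (JJ N) tj x1 x2 x3 \<ge> wmin * (x1^2+x2^2+x3^2)"
    using eig_main[OF finJ, of tj] by blast
  have "(\<Sum>k<m. \<mu> k * length_corr N (ketbra (\<Psi> k) (\<Psi> k)))
     = (\<Sum>j\<in>JJ N. ((Pj j + LL tj r1 r2 r3 j)/2)^2) + (1/4) * (\<Sum>k<m. \<mu> k * qq (JJ N) tj (n1 k - r1) (n2 k - r2) (n3 k - r3))"
    by (rule common_value[OF mu s1 s2 s3 lck])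
  also have "(\<Sum>k<m. \<mu> k * qq (JJ N) tj (n1 k - r1) (n2 k - r2) (n3 k - r3))
      \<ge> (\<Sum>k<m. \<mu> k * (wmin * ((n1 k - r1)^2 + (n2 k - r2)^2 + (n3 k - r3)^2)))"
    using c eig by (intro sum_mono mult_left_mono) auto
  then have "(\<Sum>j\<in>JJ N. ((Pj j + LL tj r1 r2 r3 j)/2)^2) + (1/4) * (\<Sum>k<m. \<mu> k * qq (JJ N) tj (n1 k - r1) (n2 k - r2) (n3 k - r3))
     \<ge> (\<Sum>j\<in>JJ N. ((Pj j + LL tj r1 r2 r3 j)/2)^2) + (1/4) * (\<Sum>k<m. \<mu> k * (wmin * ((n1 k - r1)^2 + (n2 k - r2)^2 + (n3 k - r3)^2)))"
    by simp
  also have "(\<Sum>k<m. \<mu> k * (wmin * ((n1 k - r1)^2 + (n2 k - r2)^2 + (n3 k - r3)^2)))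
      = wmin * (\<Sum>k<m. \<mu> k * ((n1 k - r1)^2 + (n2 k - r2)^2 + (n3 k - r3)^2))"
    by (simp add: sum_distrib_left mult_ac)
  also have "(\<Sum>k<m. \<mu> k * ((n1 k - r1)^2 + (n2 k - r2)^2 + (n3 k - r3)^2)) = 1 - (r1^2+r2^2+r3^2)"
    by (rule mix_var[OF mu s1 s2 s3]) (use pb in blast)
  finally show ?thesis unfolding VV_def by (simp add: mult_ac)
qed

end

context dens begin

lemma construct:
  fixes m :: nat and \<mu> :: "nat \<Rightarrow> real"
  assumes mpos: "\<forall>k<m. \<mu> k > 0" and mu: "(\<Sum>k<m. \<mu> k) = 1"
    and s1: "(\<Sum>k<m. \<mu> k * n1 k) = r1" and s2: "(\<Sum>k<m. \<mu> k * n2 k) = r2" and s3: "(\<Sum>k<m. \<mu> k * n3 k) = r3"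
    and unit: "\<And>k. k < m \<Longrightarrow> (n1 k)^2 + (n2 k)^2 + (n3 k)^2 = 1"
    and qeq: "\<And>k. k < m \<Longrightarrow> qq (JJ N) tj (n1 k - r1) (n2 k - r2) (n3 k - r3) = wmin * ((n1 k - r1)^2 + (n2 k - r2)^2 + (n3 k - r3)^2)"
  shows "\<exists>\<Psi>. (\<forall>k<m. \<mu> k > 0 \<and> \<Psi> k \<in> carrier_vec (2^N) \<and> \<Psi> k \<bullet>c \<Psi> k = 1)
     \<and> \<rho> = mat (2^N) (2^N) (\<lambda>(i,j). \<Sum>k<m. complex_of_real (\<mu> k) * (\<Psi> k $ i) * cnj (\<Psi> k $ j))
     \<and> VV = (\<Sum>k<m. \<mu> k * length_corr N (ketbra (\<Psi> k) (\<Psi> k)))"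
proof -
  have "\<forall>k. \<exists>y. k < m \<longrightarrow> (\<forall>p<2. \<forall>q<2. y p * cnj (y q) = bm (n1 k) (n2 k) (n3 k) p q)"
  proof
    fix k show "\<exists>y. k < m \<longrightarrow> (\<forall>p<2. \<forall>q<2. y p * cnj (y q) = bm (n1 k) (n2 k) (n3 k) p q)"
    proof (cases "k < m")
      case True
      then show ?thesis using state_exists[OF unit[OF True]] by blast
    qed simp
  qed
  then obtain yf where yf: "\<forall>k. k < m \<longrightarrow> (\<forall>p<2. \<forall>q<2. yf k p * cnj (yf k q) = bm (n1 k) (n2 k) (n3 k) p q)"
    by metis
  define \<Psi> where "\<Psi> k = yf k 0 \<cdot>\<^sub>v v0 + yf k 1 \<cdot>\<^sub>v v1" for k
  have Pc: "\<Psi> k \<in> carrier_vec (2^N)" for k using v0 v1 by (simp add: \<Psi>_def)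
  have sp: "\<Psi> k $ l = (\<Sum>p<2. yf k p * vs p $ l)" if "l < 2^N" for k l
    using that v0 v1 by (simp add: \<Psi>_def sum2 vs_def)
  have un: "\<Psi> k \<bullet>c \<Psi> k = 1" if k: "k < m" for k
  proof -
    have "\<Psi> k \<bullet>c \<Psi> k = yf k 0 * cnj (yf k 0) + yf k 1 * cnj (yf k 1)" by (rule cdot_span[OF Pc sp])
    also have "\<dots> = bm (n1 k) (n2 k) (n3 k) 0 0 + bm (n1 k) (n2 k) (n3 k) 1 1" using yf k by simp
    also have "\<dots> = 1" by (simp add: bm_def complex_eq_iff field_simps)
    finally show ?thesis .
  qed
  have mixeq: "mat (2^N) (2^N) (\<lambda>(i,j). \<Sum>k<m. complex_of_real (\<mu> k) * (\<Psi> k $ i) * cnj (\<Psi> k $ j))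
      = blm (\<lambda>p q. \<Sum>k<m. complex_of_real (\<mu> k) * (yf k p * cnj (yf k q)))"
    by (rule mixture) (simp add: sp)
  also have "\<dots> = blm (bm r1 r2 r3)"
  proof (rule blm_cong)
    fix p q :: nat assume pq: "p < 2" "q < 2"
    have "(\<Sum>k<m. complex_of_real (\<mu> k) * (yf k p * cnj (yf k q))) = (\<Sum>k<m. complex_of_real (\<mu> k) * bm (n1 k) (n2 k) (n3 k) p q)"
      using yf pq by (intro sum.cong refl) auto
    also have "\<dots> = bm r1 r2 r3 p q" by (rule bm_mix[OF mu s1 s2 s3 pq])
    finally show "(\<Sum>k<m. complex_of_real (\<mu> k) * (yf k p * cnj (yf k q))) = bm r1 r2 r3 p q" .
  qed
  finally have rho_eq: "\<rho> = mat (2^N) (2^N) (\<lambda>(i,j). \<Sum>k<m. complex_of_real (\<mu> k) * (\<Psi> k $ i) * cnj (\<Psi> k $ j))"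
    using rho_bm by simp
  have lck: "length_corr N (ketbra (\<Psi> k) (\<Psi> k)) = (\<Sum>j\<in>JJ N. ((Pj j + LL tj (n1 k) (n2 k) (n3 k) j)/2)^2)"
    if k: "k < m" for k
  proof -
    have "ketbra (\<Psi> k) (\<Psi> k) = blm (\<lambda>p q. yf k p * cnj (yf k q))"
      by (rule ketbra_blm[OF Pc sp])
    also have "\<dots> = blm (bm (n1 k) (n2 k) (n3 k))" by (rule blm_cong) (use yf k in auto)
    finally show ?thesis by (simp add: lc_bm)
  qed
  have "(\<Sum>k<m. \<mu> k * length_corr N (ketbra (\<Psi> k) (\<Psi> k)))
     = (\<Sum>j\<in>JJ N. ((Pj j + LL tj r1 r2 r3 j)/2)^2) + (1/4) * (\<Sum>k<m. \<mu> k * qq (JJ N) tj (n1 k - r1) (n2 k - r2) (n3 k - r3))"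
    by (rule common_value[OF mu s1 s2 s3 lck])
  also have "(\<Sum>k<m. \<mu> k * qq (JJ N) tj (n1 k - r1) (n2 k - r2) (n3 k - r3))
      = (\<Sum>k<m. \<mu> k * (wmin * ((n1 k - r1)^2 + (n2 k - r2)^2 + (n3 k - r3)^2)))"
  proof (rule sum.cong[OF refl])
    fix k assume "k \<in> {..<m}"
    then have kk: "k < m" by simp
    show "\<mu> k * qq (JJ N) tj (n1 k - r1) (n2 k - r2) (n3 k - r3) = \<mu> k * (wmin * ((n1 k - r1)^2 + (n2 k - r2)^2 + (n3 k - r3)^2))"
      by (simp only: qeq[OF kk])
  qed
  also have "\<dots> = wmin * (\<Sum>k<m. \<mu> k * ((n1 k - r1)^2 + (n2 k - r2)^2 + (n3 k - r3)^2))"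
    by (simp add: sum_distrib_left mult_ac)
  also have "(\<Sum>k<m. \<mu> k * ((n1 k - r1)^2 + (n2 k - r2)^2 + (n3 k - r3)^2)) = 1 - (r1^2+r2^2+r3^2)"
    by (rule mix_var[OF mu s1 s2 s3 unit])
  finally have "(\<Sum>k<m. \<mu> k * length_corr N (ketbra (\<Psi> k) (\<Psi> k))) = VV"
    unfolding VV_def by (simp add: mult_ac)
  then have vv: "VV = (\<Sum>k<m. \<mu> k * length_corr N (ketbra (\<Psi> k) (\<Psi> k)))" by (rule sym)
  have cc: "\<forall>k<m. \<mu> k > 0 \<and> \<Psi> k \<in> carrier_vec (2^N) \<and> \<Psi> k \<bullet>c \<Psi> k = 1" using mpos Pc un by blast
  show ?thesis by (rule exI[of _ \<Psi>], intro conjI cc rho_eq vv)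
qed

lemma VV_in:
  "\<exists>m \<mu> \<Psi>. VV = (\<Sum>k<(m::nat). \<mu> k * length_corr N (ketbra (\<Psi> k) (\<Psi> k)))
     \<and> (\<forall>k<m. \<mu> k > 0 \<and> \<Psi> k \<in> carrier_vec (2^N) \<and> \<Psi> k \<bullet>c \<Psi> k = 1) \<and> (\<Sum>k<m. \<mu> k) = 1
     \<and> \<rho> = mat (2^N) (2^N) (\<lambda>(i,j). \<Sum>k<m. complex_of_real (\<mu> k) * (\<Psi> k $ i) * cnj (\<Psi> k $ j))"
proof -
  obtain e1 e2 e3 where e: "e1^2+e2^2+e3^2 = 1" "qq (JJ N) tj e1 e2 e3 = wmin"
    using eig_main[OF finJ, of tj] by blast
  have qs: "qq (JJ N) tj (s*e1) (s*e2) (s*e3) = wmin * ((s*e1)^2 + (s*e2)^2 + (s*e3)^2)" for s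
  proof -
    have "(s*e1)^2 + (s*e2)^2 + (s*e3)^2 = s^2 * (e1^2+e2^2+e3^2)" by (simp add: power_mult_distrib algebra_simps)
    then show ?thesis using qq_hom[of "JJ N" tj s e1 e2 e3] e by simp
  qed
  show ?thesis
  proof (cases "r1^2 + r2^2 + r3^2 = 1")
    case True
    have q0: "qq (JJ N) tj 0 0 0 = 0" by (simp add: qq_def LL_def)
    have c1: "\<forall>k<(1::nat). (1::real) > 0" by simp
    have c2: "(\<Sum>k<(1::nat). (1::real)) = 1" by simp
    have c3: "(\<Sum>k<(1::nat). 1 * r1) = r1" "(\<Sum>k<(1::nat). 1 * r2) = r2" "(\<Sum>k<(1::nat). 1 * r3) = r3" by simp_all
    have c4: "\<And>k. k < (1::nat) \<Longrightarrow> r1^2 + r2^2 + r3^2 = 1" using True by simp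
    have c5: "\<And>k. k < (1::nat) \<Longrightarrow> qq (JJ N) tj (r1 - r1) (r2 - r2) (r3 - r3) = wmin * ((r1 - r1)^2 + (r2 - r2)^2 + (r3 - r3)^2)"
      using q0 by simp
    from construct[of 1 "\<lambda>_. 1" "\<lambda>_. r1" "\<lambda>_. r2" "\<lambda>_. r3", OF c1 c2 c3 c4 c5]
    obtain \<Psi> where P: "(\<forall>k<(1::nat). (1::real) > 0 \<and> \<Psi> k \<in> carrier_vec (2^N) \<and> \<Psi> k \<bullet>c \<Psi> k = 1)
      \<and> \<rho> = mat (2^N) (2^N) (\<lambda>(i,j). \<Sum>k<(1::nat). complex_of_real 1 * (\<Psi> k $ i) * cnj (\<Psi> k $ j))
      \<and> VV = (\<Sum>k<(1::nat). 1 * length_corr N (ketbra (\<Psi> k) (\<Psi> k)))" ..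
    note P1 = conjunct1[OF P] and P2 = conjunct1[OF conjunct2[OF P]] and P3 = conjunct2[OF conjunct2[OF P]]
    show ?thesis
      by (rule exI[of _ 1], rule exI[of _ "\<lambda>_. 1"], rule exI[of _ \<Psi>]) (intro conjI P1 P2 P3 c2)
  next
    case False
    then have lt: "r1^2 + r2^2 + r3^2 < 1" using r_le1 by simp
    obtain s1 s2 where s: "s1 > 0" "s2 < 0" "(r1 + s1*e1)^2 + (r2 + s1*e2)^2 + (r3 + s1*e3)^2 = 1"
      "(r1 + s2*e1)^2 + (r2 + s2*e2)^2 + (r3 + s2*e3)^2 = 1"
      using roots_exist[OF lt e(1)] by blast
    define sk where "sk k = (if k = 0 then s1 else s2)" for k :: nat
    define \<mu> where "\<mu> k = (if k = 0 then -s2/(s1-s2) else s1/(s1-s2))" for k :: nat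
    define n1 where "n1 k = r1 + sk k * e1" for k
    define n2 where "n2 k = r2 + sk k * e2" for k
    define n3 where "n3 k = r3 + sk k * e3" for k
    have d: "s1 - s2 > 0" using s by simp
    have mpos: "\<forall>k<2. \<mu> k > 0" using s d by (auto simp: \<mu>_def divide_pos_pos divide_neg_pos)
    have dne: "s1 - s2 \<noteq> 0" "s1 \<noteq> s2" using d by simp_all
    have mu: "(\<Sum>k<2. \<mu> k) = 1"
    proof -
      have "(\<Sum>k<2. \<mu> k) = -s2/(s1-s2) + s1/(s1-s2)" by (simp add: sum2 \<mu>_def)
      also have "\<dots> = (-s2 + s1)/(s1-s2)" by (rule add_divide_distrib[symmetric])
      also have "-s2 + s1 = s1 - s2" by simp
      also have "(s1 - s2)/(s1-s2) = 1" using dne(1) by (rule divide_self)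
      finally show ?thesis .
    qed
    have ms: "\<mu> 0 * s1 + \<mu> 1 * s2 = 0" using dne by (simp add: \<mu>_def field_simps)
    have s1': "(\<Sum>k<2. \<mu> k * n1 k) = r1"
    proof -
      have "(\<Sum>k<2. \<mu> k * n1 k) = r1 * (\<mu> 0 + \<mu> 1) + e1 * (\<mu> 0 * s1 + \<mu> 1 * s2)"
        by (simp add: sum2 n1_def sk_def algebra_simps)
      then show ?thesis using mu ms by (simp add: sum2)
    qed
    have s2': "(\<Sum>k<2. \<mu> k * n2 k) = r2"
    proof -
      have "(\<Sum>k<2. \<mu> k * n2 k) = r2 * (\<mu> 0 + \<mu> 1) + e2 * (\<mu> 0 * s1 + \<mu> 1 * s2)"
        by (simp add: sum2 n2_def sk_def algebra_simps)
      then show ?thesis using mu ms by (simp add: sum2)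
    qed
    have s3': "(\<Sum>k<2. \<mu> k * n3 k) = r3"
    proof -
      have "(\<Sum>k<2. \<mu> k * n3 k) = r3 * (\<mu> 0 + \<mu> 1) + e3 * (\<mu> 0 * s1 + \<mu> 1 * s2)"
        by (simp add: sum2 n3_def sk_def algebra_simps)
      then show ?thesis using mu ms by (simp add: sum2)
    qed
    have unit: "(n1 k)^2 + (n2 k)^2 + (n3 k)^2 = 1" if "k < 2" for k
      using s(3,4) by (simp add: n1_def n2_def n3_def sk_def)
    have qeq: "qq (JJ N) tj (n1 k - r1) (n2 k - r2) (n3 k - r3) = wmin * ((n1 k - r1)^2 + (n2 k - r2)^2 + (n3 k - r3)^2)" for k
      unfolding n1_def n2_def n3_def using qs[of "sk k"] by simp
    from construct[OF mpos mu s1' s2' s3' unit qeq]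
    obtain \<Psi> where P: "(\<forall>k<2. \<mu> k > 0 \<and> \<Psi> k \<in> carrier_vec (2^N) \<and> \<Psi> k \<bullet>c \<Psi> k = 1)
     \<and> \<rho> = mat (2^N) (2^N) (\<lambda>(i,j). \<Sum>k<2. complex_of_real (\<mu> k) * (\<Psi> k $ i) * cnj (\<Psi> k $ j))
     \<and> VV = (\<Sum>k<2. \<mu> k * length_corr N (ketbra (\<Psi> k) (\<Psi> k)))" ..
    note P1 = conjunct1[OF P] and P2 = conjunct1[OF conjunct2[OF P]] and P3 = conjunct2[OF conjunct2[OF P]]
    show ?thesis by (rule exI[of _ 2], rule exI[of _ \<mu>], rule exI[of _ \<Psi>]) (intro conjI P1 P2 P3 mu)
  qed
qed

lemma main_dens: "convex_roof N \<rho> = VV"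
  unfolding convex_roof_def
proof (rule cInf_eq_minimum)
  show "VV \<in> {(\<Sum>k<(m::nat). \<mu> k * length_corr N (ketbra (\<Psi> k) (\<Psi> k))) | m \<mu> \<Psi>.
      (\<forall>k<m. \<mu> k > 0 \<and> \<Psi> k \<in> carrier_vec (2 ^ N) \<and> \<Psi> k \<bullet>c \<Psi> k = 1)
    \<and> (\<Sum>k<m. \<mu> k) = 1
    \<and> \<rho> = mat (2 ^ N) (2 ^ N) (\<lambda>(i,j). \<Sum>k<m. complex_of_real (\<mu> k) * (\<Psi> k $ i) * cnj (\<Psi> k $ j))}"
    unfolding mem_Collect_eq by (rule VV_in)
next
  fix x assume "x \<in> {(\<Sum>k<(m::nat). \<mu> k * length_corr N (ketbra (\<Psi> k) (\<Psi> k))) | m \<mu> \<Psi>.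
      (\<forall>k<m. \<mu> k > 0 \<and> \<Psi> k \<in> carrier_vec (2 ^ N) \<and> \<Psi> k \<bullet>c \<Psi> k = 1)
    \<and> (\<Sum>k<m. \<mu> k) = 1
    \<and> \<rho> = mat (2 ^ N) (2 ^ N) (\<lambda>(i,j). \<Sum>k<m. complex_of_real (\<mu> k) * (\<Psi> k $ i) * cnj (\<Psi> k $ j))}"
  then obtain m \<mu> \<Psi> where x: "x = (\<Sum>k<(m::nat). \<mu> k * length_corr N (ketbra (\<Psi> k) (\<Psi> k)))"
    and c: "\<forall>k<m. \<mu> k > 0 \<and> \<Psi> k \<in> carrier_vec (2 ^ N) \<and> \<Psi> k \<bullet>c \<Psi> k = 1"
    and mu: "(\<Sum>k<m. \<mu> k) = 1"
    and dec: "\<rho> = mat (2 ^ N) (2 ^ N) (\<lambda>(i,j). \<Sum>k<m. complex_of_real (\<mu> k) * (\<Psi> k $ i) * cnj (\<Psi> k $ j))"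
    unfolding mem_Collect_eq by (elim exE conjE) (rule that)
  show "VV \<le> x" unfolding x by (rule LB[OF c mu dec])
qed

end

theorem theorem5:
  fixes N :: nat and \<rho> :: "complex mat" and v0 v1 :: "complex vec"
  assumes dens: "density_matrix N \<rho>"
    and rank2: "vec_space.rank (2 ^ N) \<rho> = 2"
    and v0: "v0 \<in> carrier_vec (2 ^ N)" and v1: "v1 \<in> carrier_vec (2 ^ N)"
    and orthonormal: "v0 \<bullet>c v0 = 1" "v1 \<bullet>c v1 = 1" "v0 \<bullet>c v1 = 0"
    and support: "{\<rho> *\<^sub>v x | x. x \<in> carrier_vec (2 ^ N)} = {a \<cdot>\<^sub>v v0 + b \<cdot>\<^sub>v v1 | a b. True}"
  shows "convex_roof N \<rho> = length_corr N \<rho>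
           + 1/2 * (1 - Re (mtrace (\<rho> * \<rho>))) * min_eigenvalue (W_mat N v0 v1)"
proof -
  have supp': "\<forall>x\<in>carrier_vec (2^N). \<exists>a b. \<rho> *\<^sub>v x = a \<cdot>\<^sub>v v0 + b \<cdot>\<^sub>v v1"
  proof
    fix x :: "complex vec" assume "x \<in> carrier_vec (2^N)"
    then have "\<rho> *\<^sub>v x \<in> {\<rho> *\<^sub>v x | x. x \<in> carrier_vec (2 ^ N)}" by blast
    then show "\<exists>a b. \<rho> *\<^sub>v x = a \<cdot>\<^sub>v v0 + b \<cdot>\<^sub>v v1" unfolding support by blast
  qed
  interpret D: dens N v0 v1 \<rho>
    by unfold_locales (use v0 v1 orthonormal dens supp' in auto)
  show ?thesis using D.main_dens D.target_eq by simp
qed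

end
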